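(* Assume Assumption A holds, $N=O(n^\alpha)$, $\alpha\ge0$; for some $0\le\theta<1/11$, $s_n^2=o((n\tau)^\theta)$; $\tau\to0$; $f_n\to0$ with $f_n=s_n(nN)^{1/q}((n\tau)^{-1}+N^{-1})+s_n\tau^{-2/q'}\sqrt{n\tau}\{b^2+(nb)^{-1}\}+\tau^{-2/q'}\sqrt{s_n\tau/b}$ for some $q'\ge2$, $2\le q\le s^*/2$; $(\log n)^4/(nb)\to0$; $M_n>c\log n$ ($c>0$); $M_n=o(s_n)$; $s_n/\log n\to\infty$. Let $s\in\{2,3\}$. Then: (i) if $m>4s_n$, there exist a constant $C>0$ and $\chi_1\in(0,1)$ such that $\Theta_{m,s}<C\chi_1^m$ and $\Xi_{m,s}<Cm\chi_1^m$; (ii) if $m\le4s_n$, then $\Theta_{m,s}=O(s_n)$ and $\Xi_{m,s}=O(s_n^2)$.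
   Context: Notation: $\|X\|_q=(\mathbb E|X|^q)^{1/q}$; $|\cdot|_F$ Frobenius norm; $a\vee b=\max\{a,b\}$. Model: $(\eta_i)_{i\in\mathbb Z}$ i.i.d. in a measurable space $\mathcal S$, $(\eta_i')$ an independent copy, $\mathcal F_i=(\ldots,\eta_{i-1},\eta_i)$, $\mathcal F_i^*=(\ldots,\eta_{-1},\eta_0',\eta_1,\ldots,\eta_i)$; for $j\in\mathbb Z$, $\mathcal F_i^{(j)}$ denotes $\mathcal F_i$ with $\eta_j$ replaced by $\eta_j'$. Errors $\boldsymbol\epsilon_i(u)=\mathbf H(i/n,u,\mathcal F_i)$ with a measurable centered filter $\mathbf H=(H_1,\dots,H_p)^\top$ that is locally stationary: $\max_j\sup_{u,t}\|H_j(t,u,\mathcal F_i)-H_j(t,u,\mathcal F_i^* )\|_1=O(\chi^i)$, $\chi\in(0,1)$, and $\max_j\|H_j(t_1,u,\mathcal F_0)-H_j(t_2,u,\mathcal F_0)\|_2\le K_0|t_1-t_2|$. (Observations are $\mathbf X_{i,n}(u)=\mathbf m(i/n,u)+\boldsymbol\epsilon_i(u)$.) $\boldsymbol\Gamma_k(t,u)=\mathrm{Cov}(\mathbf H(t,u,\mathcal F_0),\mathbf H(t,u,\mathcal F_k))$. Assumption A: (1) $\sup_{u,t}\mathbb E\exp(t_0|H_j(t,u,\mathcal F_0)|)<c_0$; (2) $u$-derivatives $L_j$ of $H_j$ exist with $\sup_{t,u}\|L_j(t,u,\mathcal F_i)-L_j(t,u,\mathcal F_i^* )\|_{s^*}=O(\chi_0^i)$,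 $s^*\ge4$, and $\sup_{t,u}\|L_j(t,u,\mathcal F_i)\|_{s^*}<M_0$; (3) $t\mapsto\mathbf m(t,u)$ thrice differentiable with $\sup|\partial_t^3\mathbf m|_F\le M_1$; (4) $\lambda_{\min}(\boldsymbol\Gamma_0\boldsymbol\Gamma_0^\top)\ge c>0$. Quantities: $K$ symmetric kernel on $(-1,1)$, $\int K=1$, $K_\tau(x)=K(x/\tau)$; $b,\tau\in(0,1)$, integers $s_n,M_n,N$. $\boldsymbol\phi_{i,k}(u)=\boldsymbol\epsilon_{i-k}(u)\boldsymbol\epsilon_i(u)^\top$, $\boldsymbol\psi_{i,k}(t,u)=\sum_{\ell=(i-s_n)\vee1}^{i-M_n-1}\boldsymbol\phi_{\ell,k}(u)K_\tau(\ell/n-t)$, $\mathbf W(t,u,i/n,\mathcal F_i)=s_n^{-1}\sum_{k=1}^{s_n}\{\boldsymbol\phi_{i,k}(u)\boldsymbol\psi_{i,k}(t,u)^\top+\boldsymbol\psi_{i,k}(t,u)\boldsymbol\phi_{i,k}(u)^\top\}$ (a function of the innovations in $\mathcal F_i$), with entries $W_{r,j}$; $\mathbf W(t,u,i/n,\mathcal F_i^{(i-l)})$ is the same quantity with every innovation $\eta_{i-l}$ replaced by $\eta_{i-l}'$. Define $\theta_{l,s}=\sup_{t,u\in[0,1],1\le i\le n}\big\|\sum_{r=1}^p\{W_{r,r}(t,u,i/n,\mathcal F_i)-W_{r,r}(t,u,i/n,\mathcal F_i^{(i-l)})\}\big\|_s$, $\Theta_{m,s}=\sum_{l=m}^\infty\theta_{l,s}$,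 $\Xi_{m,s}=\sum_{l=m}^\infty l\,\theta_{l,s}$. *)

theory Defs
  imports "HOL-Probability.Probability" "HOL-Library.Landau_Symbols"
begin

definition Lnorm :: "'w measure \<Rightarrow> real \<Rightarrow> ('w \<Rightarrow> real) \<Rightarrow> ennreal" where
  "Lnorm M q X =
     (let I = (\<integral>\<^sup>+ \<omega>. ennreal (\<bar>X \<omega>\<bar> powr q) \<partial>M)
      in if I = \<infinity> then \<infinity> else ennreal (enn2real I powr (1 / q)))"

text \<open>The past F_i = (..., eta_{i-1}, eta_i), written as a backward sequence: k-th entry eta_{i-k}.\<close>
definition Fseq :: "(int \<Rightarrow> 'w \<Rightarrow> 's) \<Rightarrow> int \<Rightarrow> 'w \<Rightarrow> (nat \<Rightarrow> 's)" where
  "Fseq \<eta> i \<omega> = (\<lambda>k. \<eta> (i - int k) \<omega>)"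

definition perturb :: "(int \<Rightarrow> 'w \<Rightarrow> 's) \<Rightarrow> (int \<Rightarrow> 'w \<Rightarrow> 's) \<Rightarrow> int \<Rightarrow> int \<Rightarrow> 'w \<Rightarrow> 's" where
  "perturb \<eta> \<eta>' j = (\<lambda>k. if k = j then \<eta>' k else \<eta> k)"

definition eps :: "(real \<Rightarrow> real \<Rightarrow> (nat \<Rightarrow> 's) \<Rightarrow> real^'p) \<Rightarrow> (int \<Rightarrow> 'w \<Rightarrow> 's) \<Rightarrow> nat
                   \<Rightarrow> real \<Rightarrow> int \<Rightarrow> 'w \<Rightarrow> real^'p" where
  "eps H \<eta> n u l \<omega> = H (real_of_int l / real n) u (Fseq \<eta> l \<omega>)"

definition outer :: "real^'p \<Rightarrow> real^'p \<Rightarrow> real^'p^'p" where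
  "outer a b = (\<chi> r j. a $ r * b $ j)"

definition phi where
  "phi H \<eta> n u l k \<omega> = outer (eps H \<eta> n u (l - int k) \<omega>) (eps H \<eta> n u l \<omega>)"

definition psi where
  "psi H \<eta> n (K :: real \<Rightarrow> real) (\<tau>::real) (sN::nat) (Mn::nat) t u i k \<omega> =
     (\<Sum>l \<in> {max (i - int sN) 1 .. i - int Mn - 1}.
         K ((real_of_int l / real n - t) / \<tau>) *\<^sub>R phi H \<eta> n u l k \<omega>)"

definition Wmat where
  "Wmat H \<eta> n K \<tau> sN Mn t u i \<omega> =
     (1 / real sN) *\<^sub>R (\<Sum>k \<in> {1..sN}.
        phi H \<eta> n u i k \<omega> ** transpose (psi H \<eta> n K \<tau> sN Mn t u i k \<omega>)
      + psi H \<eta> n K \<tau> sN Mn t u i k \<omega> ** transpose (phi H \<eta> n u i k \<omega>))"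

definition trW where
  "trW H \<eta> n K \<tau> sN Mn t u i \<omega> = (\<Sum>r\<in>UNIV. Wmat H \<eta> n K \<tau> sN Mn t u i \<omega> $ r $ r)"

definition theta where
  "theta M H \<eta> \<eta>' n K \<tau> sN Mn (s::real) (l::nat) =
     (SUP x \<in> {0..1::real} \<times> {0..1::real} \<times> {1..int n}.
        (case x of (t, u, i) \<Rightarrow>
          Lnorm M s (\<lambda>\<omega>. trW H \<eta> n K \<tau> sN Mn t u i \<omega>
                        - trW H (perturb \<eta> \<eta>' (i - int l)) n K \<tau> sN Mn t u i \<omega>)))"

definition Theta where
  "Theta M H \<eta> \<eta>' n K \<tau> sN Mn s m = (\<Sum>l. theta M H \<eta> \<eta>' n K \<tau> sN Mn s (l + m))"

definition Xi where
  "Xi M H \<eta> \<eta>' n K \<tau> sN Mn s m =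
     (\<Sum>l. of_nat (l + m) * theta M H \<eta> \<eta>' n K \<tau> sN Mn s (l + m))"

text \<open>Gamma_0(t,u) = Cov(H(t,u,F_0), H(t,u,F_0)) (H is centered).\<close>
definition Gamma0 where
  "Gamma0 M H \<eta> t u = (\<chi> r j. \<integral>\<omega>. (H t u (Fseq \<eta> 0 \<omega>) $ r) * (H t u (Fseq \<eta> 0 \<omega>) $ j) \<partial>M)"

end

theory Submission
  imports Defs
begin

lemma cs_bound:
  fixes f g :: "'a \<Rightarrow> real"
  assumes fm: "f \<in> borel_measurable M" and gm: "g \<in> borel_measurable M"
    and f0: "\<And>x. f x \<ge> 0" and g0: "\<And>x. g x \<ge> 0"
    and fA: "(\<integral>\<^sup>+x. ennreal (f x ^ 2) \<partial>M) \<le> ennreal A"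
    and gB: "(\<integral>\<^sup>+x. ennreal (g x ^ 2) \<partial>M) \<le> ennreal B"
    and A: "A > 0" and B: "B > 0"
  shows "(\<integral>\<^sup>+x. ennreal (f x * g x) \<partial>M) \<le> ennreal (sqrt (A*B))"
proof -
  define e where "e = sqrt (B/A)"
  have e: "e > 0" using A B by (simp add: e_def)
  have pw: "f x * g x \<le> e/2 * f x ^ 2 + 1/(2*e) * g x ^ 2" for x
  proof -
    have "0 \<le> (e * f x - g x)^2" by simp
    hence "2 * e * (f x * g x) \<le> e^2 * f x ^ 2 + g x ^ 2" by (simp add: power2_eq_square algebra_simps)
    thus ?thesis using e by (simp add: field_simps power2_eq_square)
  qed
  have "(\<integral>\<^sup>+x. ennreal (f x * g x) \<partial>M) \<le> (\<integral>\<^sup>+x. ennreal (e/2) * ennreal (f x ^ 2) + ennreal (1/(2*e)) * ennreal (g x ^ 2) \<partial>M)"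
    apply (rule nn_integral_mono)
    using pw e by (simp add: ennreal_mult'[symmetric] ennreal_plus[symmetric] del: ennreal_plus)
  also have "\<dots> = ennreal (e/2) * (\<integral>\<^sup>+x. ennreal (f x ^ 2) \<partial>M) + ennreal (1/(2*e)) * (\<integral>\<^sup>+x. ennreal (g x ^ 2) \<partial>M)"
    using fm gm by (simp add: nn_integral_add nn_integral_cmult)
  also have "\<dots> \<le> ennreal (e/2) * ennreal A + ennreal (1/(2*e)) * ennreal B"
    by (intro add_mono mult_left_mono fA gB) auto
  also have "\<dots> = ennreal (e/2*A + B/(2*e))"
    using e A B by (simp add: ennreal_mult'[symmetric] ennreal_plus[symmetric] del: ennreal_plus)
  also have "e/2*A + B/(2*e) = sqrt (A*B)"
  proof -
    have "e * A = sqrt (A*B)" using A B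
      by (simp add: e_def real_sqrt_divide real_sqrt_mult field_simps)
    moreover have "B / e = sqrt (A*B)" using A B
      by (simp add: e_def real_sqrt_divide real_sqrt_mult field_simps)
    ultimately show ?thesis by (simp add: field_simps)
  qed
  finally show ?thesis .
qed

lemma convex_pow0: "convex_on {0::real..} (\<lambda>x. x^n)"
proof (cases "even n")
  case True
  then show ?thesis using convex_power_even convex_on_subset by blast
next
  case False
  then show ?thesis using convex_power_odd by blast
qed

lemma pow_convex_sum:
  fixes w y :: "'i \<Rightarrow> real"
  assumes "finite I" "I \<noteq> {}" "sum w I = 1" "\<And>i. i \<in> I \<Longrightarrow> w i \<ge> 0"
    "\<And>i. i \<in> I \<Longrightarrow> y i \<ge> 0"
  shows "(\<Sum>i\<in>I. w i * y i) ^ p \<le> (\<Sum>i\<in>I. w i * y i ^ p)"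
  using convex_on_sum[OF assms(1,2) convex_pow0[of p] assms(3,4), of y] assms(5)
  by auto

lemma mink:
  fixes f :: "'i \<Rightarrow> 'a \<Rightarrow> real" and b :: "'i \<Rightarrow> real"
  assumes I: "finite I" and fm: "\<And>i. i \<in> I \<Longrightarrow> f i \<in> borel_measurable M"
    and b: "\<And>i. i \<in> I \<Longrightarrow> b i > 0"
    and fb: "\<And>i. i \<in> I \<Longrightarrow> (\<integral>\<^sup>+x. ennreal (\<bar>f i x\<bar> ^ p) \<partial>M) \<le> ennreal (b i ^ p)"
    and p: "p \<ge> 1"
  shows "(\<integral>\<^sup>+x. ennreal (\<bar>\<Sum>i\<in>I. f i x\<bar> ^ p) \<partial>M) \<le> ennreal ((\<Sum>i\<in>I. b i) ^ p)"
proof (cases "I = {}")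
  case True
  then show ?thesis using p by (simp add: power_0_left)
next
  case False
  define W where "W = (\<Sum>i\<in>I. b i)"
  have W: "W > 0" unfolding W_def using I False b by (simp add: sum_pos)
  define \<kappa> where "\<kappa> i = W ^ (p-1) / b i ^ (p - 1)" for i
  have pw: "\<bar>\<Sum>i\<in>I. f i x\<bar> ^ p \<le> (\<Sum>i\<in>I. \<kappa> i * \<bar>f i x\<bar> ^ p)" for x
  proof -
    have "\<bar>\<Sum>i\<in>I. f i x\<bar> \<le> (\<Sum>i\<in>I. \<bar>f i x\<bar>)" by (rule sum_abs)
    also have "\<dots> = W * (\<Sum>i\<in>I. (b i / W) * (\<bar>f i x\<bar> / b i))"
      unfolding sum_distrib_left using b W by (intro sum.cong) force+
    finally have "\<bar>\<Sum>i\<in>I. f i x\<bar> ^ p \<le> (W * (\<Sum>i\<in>I. (b i / W) * (\<bar>f i x\<bar> / b i))) ^ p"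
      by (rule power_mono) simp
    also have "\<dots> = W ^ p * (\<Sum>i\<in>I. (b i / W) * (\<bar>f i x\<bar> / b i)) ^ p"
      by (simp add: power_mult_distrib)
    also have "\<dots> \<le> W ^ p * (\<Sum>i\<in>I. (b i / W) * (\<bar>f i x\<bar> / b i) ^ p)"
      apply (rule mult_left_mono)
       apply (rule pow_convex_sum[OF I False])
      using b W by (auto simp: W_def sum_divide_distrib[symmetric] less_imp_le)
    also have "\<dots> = (\<Sum>i\<in>I. \<kappa> i * \<bar>f i x\<bar> ^ p)"
      unfolding sum_distrib_left
    proof (rule sum.cong[OF refl])
      fix i assume i: "i \<in> I"
      have "W ^ p = W * W ^ (p - 1)" "b i ^ p = b i * b i ^ (p-1)" using p
        by (metis Suc_diff_le diff_Suc_1 power_Suc)+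
      then show "W ^ p * (b i / W * (\<bar>f i x\<bar> / b i) ^ p) = \<kappa> i * \<bar>f i x\<bar> ^ p"
        using b[OF i] W by (simp add: \<kappa>_def power_divide field_simps)
    qed
    finally show ?thesis .
  qed
  have "(\<integral>\<^sup>+x. ennreal (\<bar>\<Sum>i\<in>I. f i x\<bar> ^ p) \<partial>M) \<le> (\<integral>\<^sup>+x. (\<Sum>i\<in>I. ennreal (\<kappa> i) * ennreal (\<bar>f i x\<bar> ^ p)) \<partial>M)"
  proof (rule nn_integral_mono)
    fix x
    have "(\<Sum>i\<in>I. ennreal (\<kappa> i) * ennreal (\<bar>f i x\<bar> ^ p)) = ennreal (\<Sum>i\<in>I. \<kappa> i * \<bar>f i x\<bar> ^ p)"
    proof -
      have k0: "\<kappa> i \<ge> 0" if "i \<in> I" for i using b[OF that] W by (simp add: \<kappa>_def)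
      have "(\<Sum>i\<in>I. ennreal (\<kappa> i) * ennreal (\<bar>f i x\<bar> ^ p)) = (\<Sum>i\<in>I. ennreal (\<kappa> i * \<bar>f i x\<bar> ^ p))"
        using k0 by (intro sum.cong) (auto simp: ennreal_mult')
      also have "\<dots> = ennreal (\<Sum>i\<in>I. \<kappa> i * \<bar>f i x\<bar> ^ p)" using k0 by (intro sum_ennreal) auto
      finally show ?thesis .
    qed
    then show "ennreal (\<bar>\<Sum>i\<in>I. f i x\<bar> ^ p) \<le> (\<Sum>i\<in>I. ennreal (\<kappa> i) * ennreal (\<bar>f i x\<bar> ^ p))"
      using pw[of x] by (simp add: ennreal_leI)
  qed
  also have "\<dots> = (\<Sum>i\<in>I. ennreal (\<kappa> i) * (\<integral>\<^sup>+x. ennreal (\<bar>f i x\<bar> ^ p) \<partial>M))"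
    using fm by (subst nn_integral_sum) (auto simp: nn_integral_cmult I)
  also have "\<dots> \<le> (\<Sum>i\<in>I. ennreal (\<kappa> i) * ennreal (b i ^ p))"
    by (intro sum_mono mult_left_mono fb) auto
  also have "\<dots> = ennreal (\<Sum>i\<in>I. \<kappa> i * b i ^ p)"
  proof -
    have k0: "\<kappa> i \<ge> 0" if "i \<in> I" for i using b[OF that] W by (simp add: \<kappa>_def)
    have "(\<Sum>i\<in>I. ennreal (\<kappa> i) * ennreal (b i ^ p)) = (\<Sum>i\<in>I. ennreal (\<kappa> i * b i ^ p))"
      using k0 by (intro sum.cong) (auto simp: ennreal_mult')
    also have "\<dots> = ennreal (\<Sum>i\<in>I. \<kappa> i * b i ^ p)" using k0 b by (intro sum_ennreal) (auto simp: less_imp_le)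
    finally show ?thesis .
  qed
  also have "(\<Sum>i\<in>I. \<kappa> i * b i ^ p) = W ^ p"
  proof -
    have "(\<Sum>i\<in>I. \<kappa> i * b i ^ p) = (\<Sum>i\<in>I. W ^ (p-1) * b i)"
    proof (rule sum.cong[OF refl])
      fix i assume i: "i \<in> I"
      have "b i ^ p = b i * b i ^ (p-1)" using p by (metis Suc_diff_le diff_Suc_1 power_Suc)
      then show "\<kappa> i * b i ^ p = W ^ (p-1) * b i" using b[OF i] by (simp add: \<kappa>_def)
    qed
    also have "\<dots> = W ^ p" using p unfolding W_def[symmetric] sum_distrib_left[symmetric]
      by (metis Suc_diff_le diff_Suc_1 mult.commute power_Suc)
    finally show ?thesis .
  qed
  finally show ?thesis by (simp add: W_def)
qed

lemma prod3_pow_le: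
  fixes u v t :: real
  assumes "u \<ge> 0" "v \<ge> 0" "t \<ge> 0"
  shows "(u * v * t)^m \<le> u^(3*m) + v^(3*m) + t^(3*m)"
proof -
  define X where "X = max u (max v t)"
  have "u * v * t \<le> X*X*X" unfolding X_def using assms
    by (intro mult_mono) auto
  hence "(u * v * t)^m \<le> (X*X*X)^m" using assms by (intro power_mono) auto
  also have "(X*X*X)^m = X^(3*m)" by (simp add: power_mult power3_eq_cube)
  also have "X^(3*m) \<le> u^(3*m) + v^(3*m) + t^(3*m)"
    unfolding X_def using assms by (auto simp: max_def)
  finally show ?thesis .
qed

lemma diff_pow_le:
  fixes u v :: real
  shows "\<bar>u - v\<bar>^k \<le> 2^k * (\<bar>u\<bar>^k + \<bar>v\<bar>^k)"
proof -
  define X where "X = max \<bar>u\<bar> \<bar>v\<bar>"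
  have "\<bar>u - v\<bar> \<le> 2 * X" unfolding X_def by linarith
  hence "\<bar>u - v\<bar>^k \<le> (2*X)^k" by (intro power_mono) auto
  also have "\<dots> = 2^k * X^k" by (simp add: power_mult_distrib)
  also have "X^k \<le> \<bar>u\<bar>^k + \<bar>v\<bar>^k" unfolding X_def by (auto simp: max_def)
  finally show ?thesis by simp
qed

lemma term_bound:
  fixes a a' y z w :: "'a \<Rightarrow> real"
  assumes meas: "a \<in> borel_measurable M" "a' \<in> borel_measurable M" "y \<in> borel_measurable M"
     "z \<in> borel_measurable M" "w \<in> borel_measurable M"
  and mom: "\<And>v k. v \<in> {a,a',y,z,w} \<Longrightarrow> k \<le> 18 \<Longrightarrow> (\<integral>\<^sup>+x. ennreal (\<bar>v x\<bar>^k) \<partial>M) \<le> ennreal Mb"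
  and d1: "(\<integral>\<^sup>+x. ennreal \<bar>a x - a' x\<bar> \<partial>M) \<le> ennreal \<delta>"
  and pos: "\<delta> > 0" "Mb > 0" and pp: "1 \<le> pp" "pp \<le> 3"
  shows "(\<integral>\<^sup>+x. ennreal (\<bar>(a x - a' x) * y x * z x * w x\<bar>^pp) \<partial>M)
           \<le> ennreal (sqrt (sqrt (\<delta> * (2^12*Mb)) * (3*Mb)))"
proof -
  define D where "D x = \<bar>a x - a' x\<bar>" for x
  define Y where "Y x = \<bar>y x * z x * w x\<bar>" for x
  have Dm: "D \<in> borel_measurable M" unfolding D_def using meas by measurable
  have Ym: "Y \<in> borel_measurable M" unfolding Y_def using meas by measurable
  have D0: "D x \<ge> 0" for x by (simp add: D_def)
  have Y0: "Y x \<ge> 0" for x by (simp add: Y_def)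
  have S1: "(\<integral>\<^sup>+x. ennreal ((Y x ^ pp)^2) \<partial>M) \<le> ennreal (3*Mb)"
  proof -
    have "(\<integral>\<^sup>+x. ennreal ((Y x ^ pp)^2) \<partial>M) \<le> (\<integral>\<^sup>+x. ennreal (\<bar>y x\<bar>^(3*(2*pp))) + ennreal (\<bar>z x\<bar>^(3*(2*pp))) + ennreal (\<bar>w x\<bar>^(3*(2*pp))) \<partial>M)"
    proof (rule nn_integral_mono)
      fix x
      have "(Y x ^ pp)^2 = (\<bar>y x\<bar> * \<bar>z x\<bar> * \<bar>w x\<bar>)^(2*pp)"
        by (simp add: Y_def abs_mult power_mult[symmetric] mult.commute)
      also have "\<dots> \<le> \<bar>y x\<bar>^(3*(2*pp)) + \<bar>z x\<bar>^(3*(2*pp)) + \<bar>w x\<bar>^(3*(2*pp))"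
        by (rule prod3_pow_le) auto
      finally show "ennreal ((Y x ^ pp)^2) \<le> ennreal (\<bar>y x\<bar>^(3*(2*pp))) + ennreal (\<bar>z x\<bar>^(3*(2*pp))) + ennreal (\<bar>w x\<bar>^(3*(2*pp)))"
        by (simp add: ennreal_plus[symmetric] del: ennreal_plus)
    qed
    also have "\<dots> = (\<integral>\<^sup>+x. ennreal (\<bar>y x\<bar>^(3*(2*pp))) \<partial>M) + (\<integral>\<^sup>+x. ennreal (\<bar>z x\<bar>^(3*(2*pp))) \<partial>M) + (\<integral>\<^sup>+x. ennreal (\<bar>w x\<bar>^(3*(2*pp))) \<partial>M)"
      using meas by (simp add: nn_integral_add)
    also have "\<dots> \<le> ennreal Mb + ennreal Mb + ennreal Mb"
      using pp by (intro add_mono mom) auto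
    also have "\<dots> = ennreal (3*Mb)" using pos by (simp add: ennreal_plus[symmetric] del: ennreal_plus)
    finally show ?thesis .
  qed
  have S2: "(\<integral>\<^sup>+x. ennreal (D x ^ (4*pp-1)) \<partial>M) \<le> ennreal (2^12*Mb)"
  proof -
    let ?k = "4*pp-1"
    have "(\<integral>\<^sup>+x. ennreal (D x ^ ?k) \<partial>M) \<le> (\<integral>\<^sup>+x. ennreal (2^11) * ennreal (\<bar>a x\<bar>^?k) + ennreal (2^11) * ennreal (\<bar>a' x\<bar>^?k) \<partial>M)"
    proof (rule nn_integral_mono)
      fix x
      have "D x ^ ?k \<le> 2^?k * (\<bar>a x\<bar>^?k + \<bar>a' x\<bar>^?k)" unfolding D_def by (rule diff_pow_le)
      also have "\<dots> \<le> 2^11 * (\<bar>a x\<bar>^?k + \<bar>a' x\<bar>^?k)"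
        using pp by (intro mult_right_mono power_increasing) auto
      finally show "ennreal (D x ^ ?k) \<le> ennreal (2^11) * ennreal (\<bar>a x\<bar>^?k) + ennreal (2^11) * ennreal (\<bar>a' x\<bar>^?k)"
        unfolding distrib_left
        by (subst ennreal_mult[symmetric], simp, simp)+ (simp add: ennreal_plus[symmetric] del: ennreal_plus)
    qed
    also have "\<dots> = ennreal (2^11) * (\<integral>\<^sup>+x. ennreal (\<bar>a x\<bar>^?k) \<partial>M) + ennreal (2^11) * (\<integral>\<^sup>+x. ennreal (\<bar>a' x\<bar>^?k) \<partial>M)"
      using meas by (simp add: nn_integral_add nn_integral_cmult)
    also have "\<dots> \<le> ennreal (2^11) * ennreal Mb + ennreal (2^11) * ennreal Mb"
      using pp by (intro add_mono mult_left_mono mom) auto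
    also have "\<dots> = ennreal (2^11*Mb + 2^11*Mb)" using pos
      by (subst ennreal_plus) (auto simp: ennreal_mult)
    also have "2^11*Mb + 2^11*Mb = (2^12*Mb::real)" by simp
    finally show ?thesis .
  qed
  have S3: "(\<integral>\<^sup>+x. ennreal ((D x ^ pp)^2) \<partial>M) \<le> ennreal (sqrt (\<delta> * (2^12*Mb)))"
  proof -
    have eq: "(D x ^ pp)^2 = sqrt (D x) * (sqrt (D x) * D x ^ (2*pp-1))" for x
    proof -
      have "sqrt (D x) * sqrt (D x) = D x" using D0 by simp
      hence "sqrt (D x) * (sqrt (D x) * D x ^ (2*pp-1)) = D x * D x ^ (2*pp-1)" by (simp add: mult.assoc[symmetric])
      also have "\<dots> = D x ^ (2*pp)" using pp
        by (cases pp) (auto simp: power_Suc[symmetric] simp del: power_Suc)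
      finally show ?thesis by (simp add: power_mult[symmetric] mult.commute)
    qed
    have "(\<integral>\<^sup>+x. ennreal (sqrt (D x) * (sqrt (D x) * D x ^ (2*pp-1))) \<partial>M) \<le> ennreal (sqrt (\<delta> * (2^12*Mb)))"
    proof (rule cs_bound)
      show "(\<integral>\<^sup>+x. ennreal ((sqrt (D x))^2) \<partial>M) \<le> ennreal \<delta>" using d1 D0 by (simp add: D_def)
      have "(sqrt (D x) * D x ^ (2*pp-1))^2 = D x ^ (4*pp-1)" for x
      proof -
        have "(sqrt (D x) * D x ^ (2*pp-1))^2 = D x * D x ^ (2*(2*pp-1))"
          using D0 by (simp add: power_mult_distrib power_mult[symmetric] mult.commute)
        also have "\<dots> = D x ^ (4*pp-1)" using pp
          by (cases pp) (auto simp: power_Suc[symmetric] simp del: power_Suc intro!: arg_cong[where f="\<lambda>k. D x ^ k"])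
        finally show ?thesis .
      qed
      then show "(\<integral>\<^sup>+x. ennreal ((sqrt (D x) * D x ^ (2*pp-1))^2) \<partial>M) \<le> ennreal (2^12*Mb)" using S2 by simp
    qed (use Dm D0 pos in auto)
    then show ?thesis using eq by simp
  qed
  have "(\<integral>\<^sup>+x. ennreal (D x ^ pp * Y x ^ pp) \<partial>M) \<le> ennreal (sqrt (sqrt (\<delta> * (2^12*Mb)) * (3*Mb)))"
    by (rule cs_bound[OF _ _ _ _ S3 S1]) (use Dm Ym D0 Y0 pos in auto)
  moreover have "\<bar>(a x - a' x) * y x * z x * w x\<bar>^pp = D x ^ pp * Y x ^ pp" for x
    by (simp add: D_def Y_def abs_mult power_mult_distrib)
  ultimately show ?thesis by simp
qed


lemma (in prob_space) indep_sets_reindex: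
  assumes f: "inj_on f I" and ind: "indep_sets F (f ` I)"
  shows "indep_sets (\<lambda>i. F (f i)) I"
  unfolding indep_sets_def
proof (intro conjI ballI allI impI)
  fix i assume "i \<in> I" then show "F (f i) \<subseteq> events" using ind by (auto simp: indep_sets_def)
next
  fix J A assume J: "J \<subseteq> I" "J \<noteq> {}" "finite J" and A: "A \<in> Pi J (\<lambda>i. F (f i))"
  define A' where "A' j = A (the_inv_into J f j)" for j
  have fJ: "inj_on f J" using f J inj_on_subset by blast
  have A'f: "A' (f i) = A i" if "i \<in> J" for i using fJ that by (simp add: A'_def the_inv_into_f_f)
  have "prob (\<Inter>j\<in>f ` J. A' j) = (\<Prod>j\<in>f ` J. prob (A' j))"
  proof -
    have "A' \<in> Pi (f ` J) F" using A A'f by (auto simp: Pi_iff)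
    moreover have "f ` J \<subseteq> f ` I" "f ` J \<noteq> {}" "finite (f ` J)" using J by auto
    ultimately show ?thesis using ind unfolding indep_sets_def by blast
  qed
  moreover have "(\<Inter>j\<in>f ` J. A' j) = (\<Inter>i\<in>J. A i)" using A'f by auto
  moreover have "(\<Prod>j\<in>f ` J. prob (A' j)) = (\<Prod>i\<in>J. prob (A i))"
    using fJ A'f by (simp add: prod.reindex)
  ultimately show "prob (\<Inter>j\<in>J. A j) = (\<Prod>j\<in>J. prob (A j))" by simp
qed

lemma (in prob_space) indep_vars_reindex_inj:
  assumes f: "inj f" and ind: "indep_vars (\<lambda>_. S) X UNIV"
  shows "indep_vars (\<lambda>_. S) (\<lambda>n. X (f n)) UNIV"
proof -
  have "indep_vars (\<lambda>_. S) X (range f)" using ind by (rule indep_vars_subset) auto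
  then show ?thesis unfolding indep_vars_def
    using indep_sets_reindex[OF f] by auto
qed

definition Yc :: "(int \<Rightarrow> 'w \<Rightarrow> 's) \<Rightarrow> (int \<Rightarrow> 'w \<Rightarrow> 's) \<Rightarrow> int + int \<Rightarrow> 'w \<Rightarrow> 's" where
  "Yc \<eta> \<eta>' x = (case x of Inl i \<Rightarrow> \<eta> i | Inr i \<Rightarrow> \<eta>' i)"

lemma dist_inj:
  fixes f :: "nat \<Rightarrow> int + int"
  assumes P: "prob_space M"
    and indep: "prob_space.indep_vars M (\<lambda>_. S) (\<lambda>x. case x of Inl i \<Rightarrow> \<eta> i | Inr i \<Rightarrow> \<eta>' i) UNIV"
    and ident: "\<forall>i. distr M S (\<eta> i) = distr M S (\<eta> 0) \<and> distr M S (\<eta>' i) = distr M S (\<eta> 0)"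
    and f: "inj f"
  shows "distr M (PiM UNIV (\<lambda>_. S)) (\<lambda>\<omega> n. Yc \<eta> \<eta>' (f n) \<omega>) = PiM UNIV (\<lambda>_. distr M S (\<eta> 0))"
    and "(\<lambda>\<omega> n. Yc \<eta> \<eta>' (f n) \<omega>) \<in> measurable M (PiM UNIV (\<lambda>_. S))"
proof -
  interpret prob_space M by fact
  have ind: "indep_vars (\<lambda>_. S) (Yc \<eta> \<eta>') UNIV" using indep unfolding Yc_def[abs_def] .
  have ind2: "indep_vars (\<lambda>_. S) (\<lambda>n. Yc \<eta> \<eta>' (f n)) UNIV" by (rule indep_vars_reindex_inj[OF f ind])
  have rv: "random_variable S (Yc \<eta> \<eta>' (f n))" for n using ind2 unfolding indep_vars_def by auto
  have "distr M (PiM UNIV (\<lambda>_. S)) (\<lambda>x. \<lambda>i\<in>UNIV. Yc \<eta> \<eta>' (f i) x) = (PiM UNIV (\<lambda>i. distr M S (Yc \<eta> \<eta>' (f i))))"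
    using indep_vars_iff_distr_eq_PiM[where I=UNIV and M'="\<lambda>_. S" and X="\<lambda>n. Yc \<eta> \<eta>' (f n)"] ind2 rv by auto
  moreover have "(\<lambda>x. \<lambda>i\<in>UNIV. Yc \<eta> \<eta>' (f i) x) = (\<lambda>\<omega> n. Yc \<eta> \<eta>' (f n) \<omega>)" by (simp add: restrict_def)
  moreover have "distr M S (Yc \<eta> \<eta>' (f i)) = distr M S (\<eta> 0)" for i
    using ident by (auto simp: Yc_def split: sum.split)
  ultimately show "distr M (PiM UNIV (\<lambda>_. S)) (\<lambda>\<omega> n. Yc \<eta> \<eta>' (f n) \<omega>) = PiM UNIV (\<lambda>_. distr M S (\<eta> 0))"
    by simp
  show "(\<lambda>\<omega> n. Yc \<eta> \<eta>' (f n) \<omega>) \<in> measurable M (PiM UNIV (\<lambda>_. S))"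
  proof (rule measurable_PiM_single')
    fix i :: nat show "Yc \<eta> \<eta>' (f i) \<in> measurable M S" using rv[of i] by simp
  next
    show "(\<lambda>\<omega> n. Yc \<eta> \<eta>' (f n) \<omega>) \<in> space M \<rightarrow> (\<Pi>\<^sub>E i\<in>UNIV. space S)"
      using measurable_space[OF rv] by (auto simp: PiE_iff)
  qed
qed

locale iidsetup =
  fixes M :: "'w measure" and S :: "'s measure" and \<eta> \<eta>' :: "int \<Rightarrow> 'w \<Rightarrow> 's"
  assumes P: "prob_space M"
    and indep: "prob_space.indep_vars M (\<lambda>_. S) (\<lambda>x. case x of Inl i \<Rightarrow> \<eta> i | Inr i \<Rightarrow> \<eta>' i) UNIV"
    and ident: "\<forall>i. distr M S (\<eta> i) = distr M S (\<eta> 0) \<and> distr M S (\<eta>' i) = distr M S (\<eta> 0)"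
begin

abbreviation "PP \<equiv> PiM UNIV (\<lambda>_::nat. distr M S (\<eta> 0))"

lemma dist_inj':
  fixes f :: "nat \<Rightarrow> int + int" assumes "inj f"
  shows "distr M (PiM UNIV (\<lambda>_. S)) (\<lambda>\<omega> n. Yc \<eta> \<eta>' (f n) \<omega>) = PP"
    and "(\<lambda>\<omega> n. Yc \<eta> \<eta>' (f n) \<omega>) \<in> measurable M (PiM UNIV (\<lambda>_. S))"
  using dist_inj[OF P indep ident assms] by auto

lemma int_inj':
  fixes f :: "nat \<Rightarrow> int + int" assumes "inj f" and g: "g \<in> borel_measurable (PiM UNIV (\<lambda>_. S))"
  shows "(\<integral>\<^sup>+\<omega>. g (\<lambda>n. Yc \<eta> \<eta>' (f n) \<omega>) \<partial>M) = (\<integral>\<^sup>+z. g z \<partial>PP)"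
proof -
  have "(\<integral>\<^sup>+z. g z \<partial>PP) = (\<integral>\<^sup>+z. g z \<partial>distr M (PiM UNIV (\<lambda>_. S)) (\<lambda>\<omega> n. Yc \<eta> \<eta>' (f n) \<omega>))"
    using dist_inj'(1)[OF assms(1)] by simp
  also have "\<dots> = (\<integral>\<^sup>+\<omega>. g (\<lambda>n. Yc \<eta> \<eta>' (f n) \<omega>) \<partial>M)"
    by (rule nn_integral_distr[OF dist_inj'(2)[OF assms(1)]]) (use g in simp)
  finally show ?thesis by simp
qed

lemma fseq_repr: "Fseq \<eta> l \<omega> = (\<lambda>k. Yc \<eta> \<eta>' (Inl (l - int k)) \<omega>)"
  by (simp add: Fseq_def Yc_def)

lemma fseqp_repr: "Fseq (perturb \<eta> \<eta>' j) l \<omega> = (\<lambda>k. Yc \<eta> \<eta>' (if l - int k = j then Inr j else Inl (l - int k)) \<omega>)"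
  by (auto simp: Fseq_def Yc_def perturb_def)

lemma inj1: "inj (\<lambda>k::nat. Inl (l - int k) :: int + int)"
  by (auto simp: inj_def)

lemma inj2: "inj (\<lambda>k::nat. if l - int k = j then Inr j else Inl (l - int k) :: int + int)"
  by (auto simp: inj_def split: if_splits)

lemma fseq_meas: "(\<lambda>\<omega>. Fseq \<eta> l \<omega>) \<in> measurable M (PiM UNIV (\<lambda>_. S))"
  unfolding fseq_repr by (rule dist_inj'(2)[OF inj1])

lemma fseqp_meas: "(\<lambda>\<omega>. Fseq (perturb \<eta> \<eta>' j) l \<omega>) \<in> measurable M (PiM UNIV (\<lambda>_. S))"
  unfolding fseqp_repr by (rule dist_inj'(2)[OF inj2])

lemma fseq_int:
  assumes g: "g \<in> borel_measurable (PiM UNIV (\<lambda>_. S))"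
  shows "(\<integral>\<^sup>+\<omega>. g (Fseq \<eta> l \<omega>) \<partial>M) = (\<integral>\<^sup>+z. g z \<partial>PP)"
  unfolding fseq_repr by (rule int_inj'[OF inj1 g])

lemma fseqp_int:
  assumes g: "g \<in> borel_measurable (PiM UNIV (\<lambda>_. S))"
  shows "(\<integral>\<^sup>+\<omega>. g (Fseq (perturb \<eta> \<eta>' j) l \<omega>) \<partial>M) = (\<integral>\<^sup>+z. g z \<partial>PP)"
  unfolding fseqp_repr by (rule int_inj'[OF inj2 g])

definition shf :: "(nat \<Rightarrow> 's) \<Rightarrow> (nat \<Rightarrow> 's)" where "shf z = (\<lambda>k. z (Suc k))"
definition rpf :: "int \<Rightarrow> (nat \<Rightarrow> 's) \<Rightarrow> (nat \<Rightarrow> 's)" where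
  "rpf d z = (\<lambda>k. if int k = d then z 0 else z (Suc k))"

lemma shf_meas: "shf \<in> measurable (PiM UNIV (\<lambda>_. S)) (PiM UNIV (\<lambda>_. S))"
proof -
  have "(\<lambda>z k. z (Suc k)) \<in> measurable (PiM UNIV (\<lambda>_. S)) (PiM UNIV (\<lambda>_. S))"
  proof (rule measurable_PiM_single')
    fix k :: nat show "(\<lambda>z. z (Suc k)) \<in> measurable (PiM UNIV (\<lambda>_. S)) S"
      by (rule measurable_component_singleton) simp
  qed (auto simp: space_PiM PiE_iff)
  then show ?thesis by (simp add: shf_def[abs_def])
qed

lemma rpf_meas: "rpf d \<in> measurable (PiM UNIV (\<lambda>_. S)) (PiM UNIV (\<lambda>_. S))"
proof -
  have "(\<lambda>z k. if int k = d then z 0 else z (Suc k)) \<in> measurable (PiM UNIV (\<lambda>_. S)) (PiM UNIV (\<lambda>_. S))"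
  proof (rule measurable_PiM_single')
    fix k :: nat show "(\<lambda>z. if int k = d then z 0 else z (Suc k)) \<in> measurable (PiM UNIV (\<lambda>_. S)) S"
      by (cases "int k = d") (simp_all add: measurable_component_singleton)
  qed (auto simp: space_PiM PiE_iff)
  then show ?thesis by (simp add: rpf_def[abs_def])
qed

lemma inj3: "inj ((\<lambda>n::nat. case n of 0 \<Rightarrow> Inr j | Suc k \<Rightarrow> Inl (l - int k)) :: nat \<Rightarrow> int + int)"
  by (auto simp: inj_def split: nat.splits)

lemma pair_eq:
  assumes h: "h \<in> borel_measurable (PiM UNIV (\<lambda>_. S))"
  shows "(\<integral>\<^sup>+\<omega>. ennreal \<bar>h (Fseq \<eta> l \<omega>) - h (Fseq (perturb \<eta> \<eta>' j) l \<omega>)\<bar> \<partial>M)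
       = (\<integral>\<^sup>+\<omega>. ennreal \<bar>h (Fseq \<eta> (l - j) \<omega>) - h (Fseq (perturb \<eta> \<eta>' 0) (l - j) \<omega>)\<bar> \<partial>M)"
proof -
  define G where "G z = ennreal \<bar>h (shf z) - h (rpf (l - j) z)\<bar>" for z
  have Gm: "G \<in> borel_measurable (PiM UNIV (\<lambda>_. S))"
    unfolding G_def using measurable_compose[OF shf_meas h] measurable_compose[OF rpf_meas h] by measurable
  have r1: "\<bar>h (Fseq \<eta> a \<omega>) - h (Fseq (perturb \<eta> \<eta>' b) a \<omega>)\<bar>
      = G (\<lambda>n. Yc \<eta> \<eta>' (case n of 0 \<Rightarrow> Inr b | Suc k \<Rightarrow> Inl (a - int k)) \<omega>)" if "a - b = l - j" for a b \<omega>
  proof -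
    have "Fseq \<eta> a \<omega> = shf (\<lambda>n. Yc \<eta> \<eta>' (case n of 0 \<Rightarrow> Inr b | Suc k \<Rightarrow> Inl (a - int k)) \<omega>)"
      by (simp add: shf_def Fseq_def Yc_def)
    moreover have "Fseq (perturb \<eta> \<eta>' b) a \<omega> = rpf (l - j) (\<lambda>n. Yc \<eta> \<eta>' (case n of 0 \<Rightarrow> Inr b | Suc k \<Rightarrow> Inl (a - int k)) \<omega>)"
    proof -
      show ?thesis
      proof (rule ext)
        fix k
        show "Fseq (perturb \<eta> \<eta>' b) a \<omega> k = rpf (l - j) (\<lambda>n. Yc \<eta> \<eta>' (case n of 0 \<Rightarrow> Inr b | Suc k \<Rightarrow> Inl (a - int k)) \<omega>) k"
        proof (cases "int k = l - j")
          case True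
          then have "a - int k = b" using that by simp
          then show ?thesis using True by (simp add: rpf_def Fseq_def Yc_def perturb_def)
        next
          case False
          then have "a - int k \<noteq> b" using that by simp
          then show ?thesis using False by (simp add: rpf_def Fseq_def Yc_def perturb_def)
        qed
      qed
    qed
    ultimately show ?thesis by (simp add: G_def)
  qed
  have "(\<integral>\<^sup>+\<omega>. ennreal \<bar>h (Fseq \<eta> l \<omega>) - h (Fseq (perturb \<eta> \<eta>' j) l \<omega>)\<bar> \<partial>M) = (\<integral>\<^sup>+z. G z \<partial>PP)"
    using r1[of l j] int_inj'[OF inj3 Gm] by simp
  moreover have "(\<integral>\<^sup>+\<omega>. ennreal \<bar>h (Fseq \<eta> (l - j) \<omega>) - h (Fseq (perturb \<eta> \<eta>' 0) (l - j) \<omega>)\<bar> \<partial>M) = (\<integral>\<^sup>+z. G z \<partial>PP)"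
    using r1[of "l - j" 0] int_inj'[OF inj3 Gm] by simp
  ultimately show ?thesis by simp
qed

lemma pert_below: "l < j \<Longrightarrow> Fseq (perturb \<eta> \<eta>' j) l \<omega> = Fseq \<eta> l \<omega>"
  by (auto simp: Fseq_def perturb_def)

end


lemma pow_fact_le_exp:
  fixes y :: real assumes "y \<ge> 0"
  shows "y ^ n / fact n \<le> exp y"
proof -
  have s: "summable (\<lambda>n. y ^ n /\<^sub>R fact n)" using exp_converges[of y] sums_summable by blast
  have "(\<Sum>i\<in>{n}. y ^ i /\<^sub>R fact i) \<le> (\<Sum>i. y ^ i /\<^sub>R fact i)"
    by (rule sum_le_suminf[OF s]) (use assms in auto)
  also have "\<dots> = exp y" using exp_converges[of y] sums_unique by metis
  finally show ?thesis by (simp add: divide_inverse mult.commute)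
qed

lemma pow_le_exp:
  fixes x t0 :: real assumes t0: "t0 > 0" and k: "k \<le> 18"
  shows "\<bar>x\<bar>^k \<le> 1 + fact 18 / t0^18 * exp (t0 * \<bar>x\<bar>)"
proof (cases "\<bar>x\<bar> \<le> 1")
  case True
  then have "\<bar>x\<bar>^k \<le> 1" by (simp add: power_le_one)
  moreover have "0 \<le> fact 18 / t0^18 * exp (t0 * \<bar>x\<bar>)" using t0 by simp
  ultimately show ?thesis by linarith
next
  case False
  then have "\<bar>x\<bar>^k \<le> \<bar>x\<bar>^18" using k by (intro power_increasing) auto
  also have "\<bar>x\<bar>^18 = fact 18 / t0^18 * ((t0 * \<bar>x\<bar>)^18 / fact 18)"
    using t0 by (simp add: power_mult_distrib)
  also have "\<dots> \<le> fact 18 / t0^18 * exp (t0 * \<bar>x\<bar>)"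
    using t0 by (intro mult_left_mono pow_fact_le_exp) auto
  finally show ?thesis by linarith
qed

lemma vec_comp_meas:
  fixes h :: "'a \<Rightarrow> real^'p"
  assumes "h \<in> borel_measurable N"
  shows "(\<lambda>x. h x $ r) \<in> borel_measurable N"
  by (rule measurable_compose[OF assms borel_measurable_continuous_onI])
     (intro continuous_intros)

lemma Lnorm1: "Lnorm M 1 f = (\<integral>\<^sup>+x. ennreal \<bar>f x\<bar> \<partial>M)"
  by (auto simp: Lnorm_def Let_def ennreal_enn2real_if)


lemma trW_expand:
  "trW H \<eta> n K \<tau> sN Mn t u i \<omega> =
   (\<Sum>k\<in>{1..sN}. \<Sum>l\<in>{max (i - int sN) 1 .. i - int Mn - 1}. \<Sum>r\<in>UNIV. \<Sum>j\<in>UNIV.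
      (2 * K ((real_of_int l / real n - t) / \<tau>) / real sN) *
      (eps H \<eta> n u (i - int k) \<omega> $ r * eps H \<eta> n u (l - int k) \<omega> $ r *
       eps H \<eta> n u i \<omega> $ j * eps H \<eta> n u l \<omega> $ j))"
proof -
  let ?E = "\<lambda>a r. eps H \<eta> n u a \<omega> $ r"
  let ?L = "{max (i - int sN) 1 .. i - int Mn - 1}"
  let ?K = "\<lambda>l. K ((real_of_int l / real n - t) / \<tau>)"
  have psi: "psi H \<eta> n K \<tau> sN Mn t u i k \<omega> $ r $ j = (\<Sum>l\<in>?L. ?K l * (?E (l - int k) r * ?E l j))" for k r j
    by (simp add: psi_def phi_def outer_def)
  have diag: "Wmat H \<eta> n K \<tau> sN Mn t u i \<omega> $ r $ r =
     (1 / real sN) * (\<Sum>k\<in>{1..sN}. \<Sum>j\<in>UNIV. 2 * ((?E (i - int k) r * ?E i j) * psi H \<eta> n K \<tau> sN Mn t u i k \<omega> $ r $ j))" for r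
    by (simp add: Wmat_def matrix_matrix_mult_def transpose_def phi_def outer_def sum.distrib[symmetric] sum_distrib_left algebra_simps)
  have sw: "(\<Sum>r\<in>A. \<Sum>k\<in>B. \<Sum>l\<in>C. g r k l) = (\<Sum>k\<in>B. \<Sum>l\<in>C. \<Sum>r\<in>A. g r k l)" for A B C and g :: "_ \<Rightarrow> _ \<Rightarrow> _ \<Rightarrow> real"
    by (subst sum.swap) (intro sum.cong refl sum.swap)
  define F where "F r k l j = (2 * ?K l / real sN) * (?E (i - int k) r * ?E (l - int k) r * ?E i j * ?E l j)" for r k l j
  have d2: "Wmat H \<eta> n K \<tau> sN Mn t u i \<omega> $ r $ r = (\<Sum>k\<in>{1..sN}. \<Sum>l\<in>?L. \<Sum>j\<in>UNIV. F r k l j)" for r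
  proof -
    have "Wmat H \<eta> n K \<tau> sN Mn t u i \<omega> $ r $ r = (\<Sum>k\<in>{1..sN}. \<Sum>j\<in>UNIV. \<Sum>l\<in>?L. F r k l j)"
      unfolding diag psi F_def by (simp add: sum_distrib_left sum_distrib_right algebra_simps)
    also have "\<dots> = (\<Sum>k\<in>{1..sN}. \<Sum>l\<in>?L. \<Sum>j\<in>UNIV. F r k l j)"
      by (intro sum.cong refl sum.swap)
    finally show ?thesis .
  qed
  have "trW H \<eta> n K \<tau> sN Mn t u i \<omega> = (\<Sum>r\<in>UNIV. \<Sum>k\<in>{1..sN}. \<Sum>l\<in>?L. \<Sum>j\<in>UNIV. F r k l j)"
    unfolding trW_def d2 ..
  also have "\<dots> = (\<Sum>k\<in>{1..sN}. \<Sum>l\<in>?L. \<Sum>r\<in>UNIV. \<Sum>j\<in>UNIV. F r k l j)"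
    by (rule sw)
  finally show ?thesis by (simp add: F_def)
qed


locale model = iidsetup M S \<eta> \<eta>'
  for M :: "'w measure" and S :: "'s measure" and \<eta> \<eta>' :: "int \<Rightarrow> 'w \<Rightarrow> 's" +
  fixes H :: "real \<Rightarrow> real \<Rightarrow> (nat \<Rightarrow> 's) \<Rightarrow> real^'p::finite" and C\<phi> chi t0 c0 :: real
  assumes Hm: "\<forall>t u. H t u \<in> borel_measurable (PiM UNIV (\<lambda>_. S))"
    and phys: "\<forall>i::nat. \<forall>t. \<forall>u\<in>{0..1}. \<forall>j.
        Lnorm M 1 (\<lambda>\<omega>. H t u (Fseq \<eta> (int i) \<omega>) $ j
                      - H t u (Fseq (perturb \<eta> \<eta>' 0) (int i) \<omega>) $ j) \<le> ennreal (C\<phi> * chi ^ i)"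
    and chi: "0 < chi" "chi < 1" and Cphi: "C\<phi> > 0"
    and t0: "t0 > 0" and A1: "\<forall>t. \<forall>u\<in>{0..1}. \<forall>j.
        (\<integral>\<^sup>+\<omega>. ennreal (exp (t0 * \<bar>H t u (Fseq \<eta> 0 \<omega>) $ j\<bar>)) \<partial>M) < ennreal c0"
begin

definition "Mb = 1 + fact 18 / t0^18 * c0"

lemma c0: "c0 > 0"
proof -
  have "(\<integral>\<^sup>+\<omega>. ennreal (exp (t0 * \<bar>H 0 0 (Fseq \<eta> 0 \<omega>) $ undefined\<bar>)) \<partial>M) < ennreal c0"
    using A1 by auto
  then have "0 < ennreal c0" by (rule le_less_trans[OF zero_le])
  then show ?thesis by simp
qed

lemma Mb: "Mb > 0" using c0 t0 by (simp add: Mb_def add_pos_nonneg)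

lemma Hr_meas: "(\<lambda>x. H t u x $ r) \<in> borel_measurable (PiM UNIV (\<lambda>_. S))"
  using Hm by (intro vec_comp_meas) auto

lemma e_meas: "(\<lambda>\<omega>. H t u (Fseq \<eta> a \<omega>) $ r) \<in> borel_measurable M"
  "(\<lambda>\<omega>. H t u (Fseq (perturb \<eta> \<eta>' j) a \<omega>) $ r) \<in> borel_measurable M"
  using measurable_compose[OF fseq_meas Hr_meas] measurable_compose[OF fseqp_meas Hr_meas] by auto

lemma mom0:
  assumes u: "u \<in> {0..1}" and k: "k \<le> 18"
  shows "(\<integral>\<^sup>+\<omega>. ennreal (\<bar>H t u (Fseq \<eta> 0 \<omega>) $ r\<bar>^k) \<partial>M) \<le> ennreal Mb"
proof -
  interpret prob_space M by (rule P)
  let ?K = "fact 18 / t0^18 :: real"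
  have "(\<integral>\<^sup>+\<omega>. ennreal (\<bar>H t u (Fseq \<eta> 0 \<omega>) $ r\<bar>^k) \<partial>M)
     \<le> (\<integral>\<^sup>+\<omega>. ennreal 1 + ennreal ?K * ennreal (exp (t0 * \<bar>H t u (Fseq \<eta> 0 \<omega>) $ r\<bar>)) \<partial>M)"
  proof (rule nn_integral_mono)
    fix \<omega>
    have "\<bar>H t u (Fseq \<eta> 0 \<omega>) $ r\<bar>^k \<le> 1 + ?K * exp (t0 * \<bar>H t u (Fseq \<eta> 0 \<omega>) $ r\<bar>)"
      by (rule pow_le_exp[OF t0 k])
    moreover have "ennreal (1 + ?K * exp (t0 * \<bar>H t u (Fseq \<eta> 0 \<omega>) $ r\<bar>)) = ennreal 1 + ennreal ?K * ennreal (exp (t0 * \<bar>H t u (Fseq \<eta> 0 \<omega>) $ r\<bar>))"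
    proof -
      have "ennreal ?K * ennreal (exp (t0 * \<bar>H t u (Fseq \<eta> 0 \<omega>) $ r\<bar>)) = ennreal (?K * exp (t0 * \<bar>H t u (Fseq \<eta> 0 \<omega>) $ r\<bar>))"
        by (rule ennreal_mult[symmetric]) (use t0 in auto)
      moreover have "ennreal (1 + ?K * exp (t0 * \<bar>H t u (Fseq \<eta> 0 \<omega>) $ r\<bar>)) = ennreal 1 + ennreal (?K * exp (t0 * \<bar>H t u (Fseq \<eta> 0 \<omega>) $ r\<bar>))"
        by (rule ennreal_plus) (use t0 in auto)
      ultimately show ?thesis by simp
    qed
    ultimately show "ennreal (\<bar>H t u (Fseq \<eta> 0 \<omega>) $ r\<bar>^k) \<le> ennreal 1 + ennreal ?K * ennreal (exp (t0 * \<bar>H t u (Fseq \<eta> 0 \<omega>) $ r\<bar>))"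
      by (metis ennreal_leI)
  qed
  also have "\<dots> = ennreal 1 + ennreal ?K * (\<integral>\<^sup>+\<omega>. ennreal (exp (t0 * \<bar>H t u (Fseq \<eta> 0 \<omega>) $ r\<bar>)) \<partial>M)"
    using e_meas(1)[of t u 0 r] by (simp add: nn_integral_add nn_integral_cmult emeasure_space_1)
  also have "\<dots> \<le> ennreal 1 + ennreal ?K * ennreal c0"
    using A1 u by (intro add_mono mult_left_mono) (auto intro: less_imp_le)
  also have "\<dots> = ennreal Mb" using t0 c0 by (simp add: Mb_def ennreal_mult[symmetric])
  finally show ?thesis .
qed

lemma mom:
  assumes u: "u \<in> {0..1}" and k: "k \<le> 18"
  shows "(\<integral>\<^sup>+\<omega>. ennreal (\<bar>H t u (Fseq \<eta> a \<omega>) $ r\<bar>^k) \<partial>M) \<le> ennreal Mb"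
    and "(\<integral>\<^sup>+\<omega>. ennreal (\<bar>H t u (Fseq (perturb \<eta> \<eta>' j) a \<omega>) $ r\<bar>^k) \<partial>M) \<le> ennreal Mb"
proof -
  have g: "(\<lambda>x. ennreal (\<bar>H t u x $ r\<bar>^k)) \<in> borel_measurable (PiM UNIV (\<lambda>_. S))"
    using Hr_meas by measurable
  show "(\<integral>\<^sup>+\<omega>. ennreal (\<bar>H t u (Fseq \<eta> a \<omega>) $ r\<bar>^k) \<partial>M) \<le> ennreal Mb"
    using mom0[OF u k, of t r] unfolding fseq_int[OF g, of a] fseq_int[OF g, of 0] .
  show "(\<integral>\<^sup>+\<omega>. ennreal (\<bar>H t u (Fseq (perturb \<eta> \<eta>' j) a \<omega>) $ r\<bar>^k) \<partial>M) \<le> ennreal Mb"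
    using mom0[OF u k, of t r] unfolding fseqp_int[OF g, of j a] fseq_int[OF g, of 0] .
qed

lemma ediff:
  assumes u: "u \<in> {0..1}"
  shows "(\<integral>\<^sup>+\<omega>. ennreal \<bar>H t u (Fseq \<eta> a \<omega>) $ r - H t u (Fseq (perturb \<eta> \<eta>' j) a \<omega>) $ r\<bar> \<partial>M)
     \<le> ennreal (C\<phi> * chi ^ nat \<bar>a - j\<bar>)"
proof (cases "a < j")
  case True
  then show ?thesis using pert_below[OF True] by simp
next
  case False
  have "(\<integral>\<^sup>+\<omega>. ennreal \<bar>H t u (Fseq \<eta> a \<omega>) $ r - H t u (Fseq (perturb \<eta> \<eta>' j) a \<omega>) $ r\<bar> \<partial>M)
      = (\<integral>\<^sup>+\<omega>. ennreal \<bar>H t u (Fseq \<eta> (a - j) \<omega>) $ r - H t u (Fseq (perturb \<eta> \<eta>' 0) (a - j) \<omega>) $ r\<bar> \<partial>M)"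
    by (rule pair_eq[OF Hr_meas])
  also have "a - j = int (nat \<bar>a - j\<bar>)" using False by simp
  also have "(\<integral>\<^sup>+\<omega>. ennreal \<bar>H t u (Fseq \<eta> (int (nat \<bar>a - j\<bar>)) \<omega>) $ r - H t u (Fseq (perturb \<eta> \<eta>' 0) (int (nat \<bar>a - j\<bar>)) \<omega>) $ r\<bar> \<partial>M)
      = Lnorm M 1 (\<lambda>\<omega>. H t u (Fseq \<eta> (int (nat \<bar>a - j\<bar>)) \<omega>) $ r - H t u (Fseq (perturb \<eta> \<eta>' 0) (int (nat \<bar>a - j\<bar>)) \<omega>) $ r)"
    by (simp add: Lnorm1)
  also have "\<dots> \<le> ennreal (C\<phi> * chi ^ nat \<bar>a - j\<bar>)" using phys u by blast
  finally show ?thesis .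
qed

end


lemma Lnorm_from_mom:
  assumes pp: "pp \<ge> 1" and B: "B \<ge> 0" and I: "(\<integral>\<^sup>+x. ennreal (\<bar>f x\<bar>^pp) \<partial>M) \<le> ennreal (B^pp)"
  shows "Lnorm M (real pp) f \<le> ennreal B"
proof -
  have eq: "\<bar>f x\<bar> powr real pp = \<bar>f x\<bar>^pp" for x
    using pp by (cases "f x = 0") (auto simp: powr_realpow)
  let ?I = "\<integral>\<^sup>+x. ennreal (\<bar>f x\<bar> powr real pp) \<partial>M"
  have I2: "?I \<le> ennreal (B^pp)" using I eq by simp
  have fin: "?I \<noteq> top" by (rule neq_top_trans[OF ennreal_neq_top I2])
  have "enn2real ?I \<le> B^pp" using I2 B by (simp add: enn2real_leI)
  then have "enn2real ?I powr (1/real pp) \<le> (B^pp) powr (1/real pp)" by (intro powr_mono2) auto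
  also have "(B^pp) powr (1/real pp) = B" using pp B
    by (simp add: root_powr_inverse[symmetric] real_root_power_cancel)
  finally show ?thesis using fin unfolding Lnorm_def Let_def by (simp add: ennreal_leI)
qed

context model begin

definition "\<rho> = root 12 chi"

lemma rho: "0 < \<rho>" "\<rho> < 1" "\<rho>^12 = chi"
  using chi by (auto simp: \<rho>_def real_root_gt_zero)

definition Eu :: "nat \<Rightarrow> real \<Rightarrow> int \<Rightarrow> 'p \<Rightarrow> 'w \<Rightarrow> real" where
  "Eu n u a r \<omega> = H (real_of_int a / real n) u (Fseq \<eta> a \<omega>) $ r"
definition Ep :: "nat \<Rightarrow> real \<Rightarrow> int \<Rightarrow> int \<Rightarrow> 'p \<Rightarrow> 'w \<Rightarrow> real" where
  "Ep n u j0 a r \<omega> = H (real_of_int a / real n) u (Fseq (perturb \<eta> \<eta>' j0) a \<omega>) $ r"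
definition "Ev n u j0 = range (\<lambda>(a,r). Eu n u a r) \<union> range (\<lambda>(a,r). Ep n u j0 a r)"

lemma Eu_Ev[simp]: "Eu n u a r \<in> Ev n u j0" and Ep_Ev[simp]: "Ep n u j0 a r \<in> Ev n u j0"
  unfolding Ev_def by auto

lemma Ev_meas: "v \<in> Ev n u j0 \<Longrightarrow> v \<in> borel_measurable M"
  unfolding Ev_def Eu_def[abs_def] Ep_def[abs_def] using e_meas by auto

lemma Ev_mom: "v \<in> Ev n u j0 \<Longrightarrow> k \<le> 18 \<Longrightarrow> u \<in> {0..1} \<Longrightarrow> (\<integral>\<^sup>+\<omega>. ennreal (\<bar>v \<omega>\<bar>^k) \<partial>M) \<le> ennreal Mb"
  unfolding Ev_def Eu_def[abs_def] Ep_def[abs_def] using mom by auto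

definition "Acst = sqrt (sqrt (C\<phi> * (2^12*Mb)) * (3*Mb)) + 1"

lemma Acst: "Acst \<ge> 1" using Cphi Mb by (simp add: Acst_def)

lemma tb:
  assumes u: "u \<in> {0..1}" and pp: "1 \<le> pp" "pp \<le> 3"
    and yzw: "y \<in> Ev n u j0" "z \<in> Ev n u j0" "w \<in> Ev n u j0"
  shows "(\<integral>\<^sup>+\<omega>. ennreal (\<bar>(Eu n u a r \<omega> - Ep n u j0 a r \<omega>) * y \<omega> * z \<omega> * w \<omega>\<bar>^pp) \<partial>M)
    \<le> ennreal ((Acst * \<rho> ^ nat \<bar>a - j0\<bar>)^pp)"
proof -
  let ?m = "nat \<bar>a - j0\<bar>"
  let ?\<delta> = "C\<phi> * chi ^ ?m"
  have h1: "(\<integral>\<^sup>+\<omega>. ennreal (\<bar>(Eu n u a r \<omega> - Ep n u j0 a r \<omega>) * y \<omega> * z \<omega> * w \<omega>\<bar>^pp) \<partial>M)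
     \<le> ennreal (sqrt (sqrt (?\<delta> * (2^12*Mb)) * (3*Mb)))"
  proof (rule term_bound)
    show "(\<integral>\<^sup>+\<omega>. ennreal \<bar>Eu n u a r \<omega> - Ep n u j0 a r \<omega>\<bar> \<partial>M) \<le> ennreal ?\<delta>"
      unfolding Eu_def Ep_def by (rule ediff[OF u])
  next
    show "Eu n u a r \<in> borel_measurable M" "Ep n u j0 a r \<in> borel_measurable M"
      "y \<in> borel_measurable M" "z \<in> borel_measurable M" "w \<in> borel_measurable M"
      using yzw by (auto intro: Ev_meas[OF Eu_Ev] Ev_meas[OF Ep_Ev] Ev_meas)
  next
    fix v k assume "v \<in> {Eu n u a r, Ep n u j0 a r, y, z, w}" "k \<le> (18::nat)"
    then show "(\<integral>\<^sup>+\<omega>. ennreal (\<bar>v \<omega>\<bar>^k) \<partial>M) \<le> ennreal Mb"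
      using yzw u Ev_mom[OF Eu_Ev] Ev_mom[OF Ep_Ev] Ev_mom by auto
  next
    show "0 < ?\<delta>" using Cphi chi by simp
    show "0 < Mb" by (rule Mb)
  qed (use pp in auto)
  have h2: "sqrt (sqrt (?\<delta> * (2^12*Mb)) * (3*Mb)) = sqrt (sqrt (C\<phi> * (2^12*Mb)) * (3*Mb)) * (\<rho>^?m)^3"
  proof -
    have "chi ^ ?m = (\<rho>^12)^?m" using rho by simp
    also have "\<dots> = (((\<rho>^?m)^3)^2)^2" by (simp add: power_mult[symmetric] mult.commute)
    finally have "chi ^ ?m = (((\<rho>^?m)^3)^2)^2" .
    hence "sqrt (sqrt (chi ^ ?m)) = (\<rho>^?m)^3" using rho by (simp only: real_sqrt_abs abs_of_nonneg zero_le_power less_imp_le)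
    then show ?thesis by (simp add: real_sqrt_mult mult_ac)
  qed
  have h3: "sqrt (sqrt (C\<phi> * (2^12*Mb)) * (3*Mb)) * (\<rho>^?m)^3 \<le> Acst^pp * (\<rho>^?m)^pp"
  proof (rule mult_mono)
    have "sqrt (sqrt (C\<phi> * (2^12*Mb)) * (3*Mb)) \<le> Acst" by (simp add: Acst_def)
    also have "Acst \<le> Acst^pp" using Acst pp by (metis power_one_right power_increasing)
    finally show "sqrt (sqrt (C\<phi> * (2^12*Mb)) * (3*Mb)) \<le> Acst^pp" .
    show "(\<rho>^?m)^3 \<le> (\<rho>^?m)^pp" using rho pp by (intro power_decreasing) (auto simp: power_le_one)
  qed (use rho Acst in auto)
  have "sqrt (sqrt (?\<delta> * (2^12*Mb)) * (3*Mb)) \<le> (Acst * \<rho>^?m)^pp"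
    using h2 h3 by (simp add: power_mult_distrib)
  then have "ennreal (sqrt (sqrt (?\<delta> * (2^12*Mb)) * (3*Mb))) \<le> ennreal ((Acst * \<rho>^?m)^pp)"
    by (rule ennreal_leI)
  then show ?thesis by (rule order_trans[OF h1])
qed

definition Tm :: "nat \<Rightarrow> real \<Rightarrow> real \<Rightarrow> real \<Rightarrow> real \<Rightarrow> real \<Rightarrow> real \<Rightarrow> real \<Rightarrow> real \<Rightarrow> real" where
  "Tm q a b c d a' b' c' d' = (if q = 0 then (a - a') * b * c * d else if q = 1 then (b - b') * a' * c * d
     else if q = 2 then (c - c') * a' * b' * d else (d - d') * a' * b' * c')"

lemma Tm_sum: "(\<Sum>q<4. Tm q a b c d a' b' c' d') = a * b * c * d - a' * b' * c' * d'"
  by (simp add: Tm_def eval_nat_numeral algebra_simps)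

lemma Dbound:
  fixes K :: "real \<Rightarrow> real" and i :: int and l :: nat
  assumes u: "u \<in> {0..1}" and Kb: "\<forall>x. \<bar>K x\<bar> \<le> Bk" and Bk: "Bk > 0"
    and pp: "1 \<le> pp" "pp \<le> 3" and s: "s > 0"
  shows "Lnorm M (real pp) (\<lambda>\<omega>. trW H \<eta> n K \<tau> s Mn t u i \<omega> - trW H (perturb \<eta> \<eta>' (i - int l)) n K \<tau> s Mn t u i \<omega>)
    \<le> ennreal (\<Sum>x\<in>({1..s} \<times> {max (i - int s) 1 .. i - int Mn - 1}) \<times> ((UNIV::'p set) \<times> (UNIV::'p set)) \<times> {..<4::nat}.
          (2*Bk/s) * Acst * \<rho> ^ nat \<bar>(case x of ((k,ll),(r,j),q) \<Rightarrow>
             (if q = 0 then i - int k else if q = 1 then ll - int k else if q = 2 then i else ll)) - (i - int l)\<bar>)"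
proof -
  define j0 where "j0 = i - int l"
  define L where "L = {max (i - int s) 1 .. i - int Mn - 1}"
  define I where "I = ({1..s} \<times> L) \<times> ((UNIV::'p set) \<times> (UNIV::'p set)) \<times> {..<4::nat}"
  define c where "c k ll = 2 * K ((real_of_int ll / real n - t) / \<tau>) / real s" for k :: nat and ll :: int
  define idx where "idx x = (case x of ((k,ll),(r,j),q) \<Rightarrow>
             (if q = 0 then i - int k else if q = 1 then ll - int k else if q = 2 then i else ll))" for x :: "(nat \<times> int) \<times> ('p \<times> 'p) \<times> nat"
  define F where "F x \<omega> = (case x of ((k,ll),(r,j),q) \<Rightarrow> c k ll *
      Tm q (Eu n u (i - int k) r \<omega>) (Eu n u (ll - int k) r \<omega>) (Eu n u i j \<omega>) (Eu n u ll j \<omega>)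
           (Ep n u j0 (i - int k) r \<omega>) (Ep n u j0 (ll - int k) r \<omega>) (Ep n u j0 i j \<omega>) (Ep n u j0 ll j \<omega>))"
    for x :: "(nat \<times> int) \<times> ('p \<times> 'p) \<times> nat" and \<omega>
  define b where "b x = (2*Bk/s) * Acst * \<rho> ^ nat \<bar>idx x - j0\<bar>" for x
  have finI: "finite I" unfolding I_def L_def by simp
  have eq1: "trW H \<eta> n K \<tau> s Mn t u i \<omega> = (\<Sum>k\<in>{1..s}. \<Sum>ll\<in>L. \<Sum>r\<in>UNIV. \<Sum>j\<in>UNIV.
      c k ll * (Eu n u (i - int k) r \<omega> * Eu n u (ll - int k) r \<omega> * Eu n u i j \<omega> * Eu n u ll j \<omega>))" for \<omega>
    unfolding trW_expand c_def L_def Eu_def eps_def by simp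
  have eq2: "trW H (perturb \<eta> \<eta>' j0) n K \<tau> s Mn t u i \<omega> = (\<Sum>k\<in>{1..s}. \<Sum>ll\<in>L. \<Sum>r\<in>UNIV. \<Sum>j\<in>UNIV.
      c k ll * (Ep n u j0 (i - int k) r \<omega> * Ep n u j0 (ll - int k) r \<omega> * Ep n u j0 i j \<omega> * Ep n u j0 ll j \<omega>))" for \<omega>
    unfolding trW_expand c_def L_def Ep_def eps_def by simp
  have Deq: "trW H \<eta> n K \<tau> s Mn t u i \<omega> - trW H (perturb \<eta> \<eta>' j0) n K \<tau> s Mn t u i \<omega> = (\<Sum>x\<in>I. F x \<omega>)" for \<omega>
  proof -
    have "(\<Sum>x\<in>I. F x \<omega>) = (\<Sum>k\<in>{1..s}. \<Sum>ll\<in>L. \<Sum>r\<in>UNIV. \<Sum>j\<in>UNIV. \<Sum>q<4. F ((k,ll),(r,j),q) \<omega>)"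
      unfolding I_def by (simp only: sum.cartesian_product')
    also have "\<dots> = (\<Sum>k\<in>{1..s}. \<Sum>ll\<in>L. \<Sum>r\<in>UNIV. \<Sum>j\<in>UNIV.
      c k ll * (Eu n u (i - int k) r \<omega> * Eu n u (ll - int k) r \<omega> * Eu n u i j \<omega> * Eu n u ll j \<omega>) -
      c k ll * (Ep n u j0 (i - int k) r \<omega> * Ep n u j0 (ll - int k) r \<omega> * Ep n u j0 i j \<omega> * Ep n u j0 ll j \<omega>))"
      unfolding F_def by (simp add: sum_distrib_left[symmetric] Tm_sum right_diff_distrib)
    also have "\<dots> = trW H \<eta> n K \<tau> s Mn t u i \<omega> - trW H (perturb \<eta> \<eta>' j0) n K \<tau> s Mn t u i \<omega>"
      unfolding eq1 eq2 by (simp add: sum_subtractf)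
    finally show ?thesis by simp
  qed
  have [measurable]: "Eu n u a r \<in> borel_measurable M" "Ep n u j0 a r \<in> borel_measurable M" for a r
    using Ev_meas[OF Eu_Ev] Ev_meas[OF Ep_Ev] by auto
  have Tm_meas: "(\<lambda>\<omega>. Tm q (f1 \<omega>) (f2 \<omega>) (f3 \<omega>) (f4 \<omega>) (g1 \<omega>) (g2 \<omega>) (g3 \<omega>) (g4 \<omega>)) \<in> borel_measurable M"
    if "f1 \<in> borel_measurable M" "f2 \<in> borel_measurable M" "f3 \<in> borel_measurable M" "f4 \<in> borel_measurable M"
       "g1 \<in> borel_measurable M" "g2 \<in> borel_measurable M" "g3 \<in> borel_measurable M" "g4 \<in> borel_measurable M" for q f1 f2 f3 f4 g1 g2 g3 g4
    unfolding Tm_def using that by (cases "q = 0"; cases "q = 1"; cases "q = 2") simp_all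
  have Fm: "F x \<in> borel_measurable M" for x
    unfolding F_def[abs_def] by (cases x) (auto intro!: Tm_meas borel_measurable_times)
  have bpos: "b x > 0" for x unfolding b_def using Bk s Acst rho by simp
  have cb: "\<bar>c k ll\<bar> \<le> 2*Bk/s" for k ll
    using Kb s by (simp add: c_def abs_mult divide_right_mono)
  have Fb: "(\<integral>\<^sup>+\<omega>. ennreal (\<bar>F x \<omega>\<bar>^pp) \<partial>M) \<le> ennreal (b x ^ pp)" if "x \<in> I" for x
  proof -
    obtain k ll r j q where x: "x = ((k,ll),(r,j),q)" by (metis prod.exhaust)
    let ?T = "\<lambda>\<omega>. Tm q (Eu n u (i - int k) r \<omega>) (Eu n u (ll - int k) r \<omega>) (Eu n u i j \<omega>) (Eu n u ll j \<omega>)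
           (Ep n u j0 (i - int k) r \<omega>) (Ep n u j0 (ll - int k) r \<omega>) (Ep n u j0 i j \<omega>) (Ep n u j0 ll j \<omega>)"
    have Tb: "(\<integral>\<^sup>+\<omega>. ennreal (\<bar>?T \<omega>\<bar>^pp) \<partial>M) \<le> ennreal ((Acst * \<rho> ^ nat \<bar>idx x - j0\<bar>)^pp)"
    proof -
      consider "q = 0" | "q = 1" | "q = 2" | "q \<noteq> 0 \<and> q \<noteq> 1 \<and> q \<noteq> 2" by blast
      then show ?thesis
      proof cases
        case 1 then show ?thesis unfolding Tm_def idx_def x by (simp add: tb[OF u pp])
      next
        case 2 then show ?thesis unfolding Tm_def idx_def x by (simp add: tb[OF u pp])
      next
        case 3 then show ?thesis unfolding Tm_def idx_def x by (simp add: tb[OF u pp])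
      next
        case 4 then show ?thesis unfolding Tm_def idx_def x by (simp add: tb[OF u pp])
      qed
    qed
    have "(\<integral>\<^sup>+\<omega>. ennreal (\<bar>F x \<omega>\<bar>^pp) \<partial>M) = (\<integral>\<^sup>+\<omega>. ennreal (\<bar>c k ll\<bar>^pp) * ennreal (\<bar>?T \<omega>\<bar>^pp) \<partial>M)"
      by (simp add: F_def x abs_mult power_mult_distrib ennreal_mult)
    also have "\<dots> = ennreal (\<bar>c k ll\<bar>^pp) * (\<integral>\<^sup>+\<omega>. ennreal (\<bar>?T \<omega>\<bar>^pp) \<partial>M)"
      by (rule nn_integral_cmult) (use Tm_meas in measurable)
    also have "\<dots> \<le> ennreal ((2*Bk/s)^pp) * ennreal ((Acst * \<rho> ^ nat \<bar>idx x - j0\<bar>)^pp)"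
      by (intro mult_mono ennreal_leI power_mono cb Tb) auto
    also have "\<dots> = ennreal (b x ^ pp)"
    proof -
      have "ennreal ((2*Bk/s)^pp) * ennreal ((Acst * \<rho> ^ nat \<bar>idx x - j0\<bar>)^pp) = ennreal ((2*Bk/s)^pp * (Acst * \<rho> ^ nat \<bar>idx x - j0\<bar>)^pp)"
        by (rule ennreal_mult[symmetric]) (use Bk s Acst rho in auto)
      also have "(2*Bk/s)^pp * (Acst * \<rho> ^ nat \<bar>idx x - j0\<bar>)^pp = b x ^ pp"
        by (simp add: b_def power_mult_distrib[symmetric] mult.assoc)
      finally show ?thesis .
    qed
    finally show ?thesis .
  qed
  have "(\<integral>\<^sup>+\<omega>. ennreal (\<bar>\<Sum>x\<in>I. F x \<omega>\<bar>^pp) \<partial>M) \<le> ennreal ((\<Sum>x\<in>I. b x)^pp)"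
    by (rule mink[OF finI Fm bpos Fb pp(1)])
  then have "(\<integral>\<^sup>+\<omega>. ennreal (\<bar>trW H \<eta> n K \<tau> s Mn t u i \<omega> - trW H (perturb \<eta> \<eta>' j0) n K \<tau> s Mn t u i \<omega>\<bar>^pp) \<partial>M) \<le> ennreal ((\<Sum>x\<in>I. b x)^pp)"
    unfolding Deq .
  then have "Lnorm M (real pp) (\<lambda>\<omega>. trW H \<eta> n K \<tau> s Mn t u i \<omega> - trW H (perturb \<eta> \<eta>' j0) n K \<tau> s Mn t u i \<omega>) \<le> ennreal (\<Sum>x\<in>I. b x)"
    by (rule Lnorm_from_mom[OF pp(1) sum_nonneg[OF less_imp_le[OF bpos]]])
  then show ?thesis unfolding I_def L_def b_def idx_def j0_def .
qed

end

definition Phi :: "real \<Rightarrow> int \<Rightarrow> real" where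
  "Phi r z = (if z \<le> 0 then r ^ nat (- z) * r / (1 - r) else (1 + r) / (1 - r) - r ^ nat z / (1 - r))"

lemma Phi_step:
  fixes r :: real
  assumes r: "0 < r" "r < 1"
  shows "Phi r (z + 1) - Phi r z = r ^ nat \<bar>z\<bar>"
proof -
  consider "z \<le> -1" | "z = 0" | "z \<ge> 1" by linarith
  then show ?thesis
  proof cases
    case 1
    then have e: "nat (- z) = Suc (nat (- z - 1))" by simp
    have "Phi r (z + 1) = r ^ nat (- z - 1) * r / (1 - r)" using 1 by (simp add: Phi_def)
    moreover have "Phi r z = r ^ nat (- z - 1) * r * r / (1 - r)" using 1 by (simp add: Phi_def e power_Suc2)
    moreover have "r ^ nat \<bar>z\<bar> = r ^ nat (- z - 1) * r" using 1 by (simp add: e power_Suc2)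
    ultimately have "Phi r (z + 1) - Phi r z = (r ^ nat (- z - 1) * r) * (1 - r) / (1 - r)"
      by (simp add: diff_divide_distrib[symmetric] algebra_simps)
    also have "\<dots> = r ^ nat (- z - 1) * r" using r by simp
    finally show ?thesis using \<open>r ^ nat \<bar>z\<bar> = r ^ nat (- z - 1) * r\<close> by simp
  next
    case 2 then show ?thesis using r by (simp add: Phi_def field_simps)
  next
    case 3
    then have e: "nat (z + 1) = Suc (nat z)" by simp
    have "Phi r (z + 1) - Phi r z = (r ^ nat z - r ^ nat z * r) / (1 - r)"
      using 3 by (simp add: Phi_def e diff_divide_distrib)
    also have "\<dots> = r ^ nat z * (1 - r) / (1 - r)" by (simp add: algebra_simps)
    also have "\<dots> = r ^ nat z" using r by simp
    finally show ?thesis using 3 by simp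
  qed
qed

lemma Phi_bounds:
  fixes r :: real
  assumes r: "0 < r" "r < 1"
  shows "0 \<le> Phi r z" "Phi r z \<le> 2 / (1 - r)"
proof -
  have d: "1 - r > 0" using r by simp
  show "0 \<le> Phi r z"
  proof (cases "z \<le> 0")
    case True then show ?thesis using r by (simp add: Phi_def)
  next
    case False
    have "r ^ nat z \<le> 1" using r by (simp add: power_le_one)
    then have "(1 + r) / (1 - r) - r ^ nat z / (1 - r) = (1 + r - r ^ nat z) / (1 - r)" by (simp add: diff_divide_distrib)
    moreover have "0 \<le> (1 + r - r ^ nat z) / (1 - r)" using d \<open>r ^ nat z \<le> 1\<close> r by simp
    ultimately show ?thesis using False by (simp add: Phi_def)
  qed
  show "Phi r z \<le> 2 / (1 - r)"
  proof (cases "z \<le> 0")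
    case True
    have "r ^ nat (-z) \<le> 1" using r by (simp add: power_le_one)
    then have "r ^ nat (-z) * r \<le> 1 * 1" using r by (intro mult_mono) auto
    then have "r ^ nat (-z) * r / (1 - r) \<le> 2 / (1 - r)" using d by (simp add: divide_right_mono)
    then show ?thesis using True by (simp add: Phi_def)
  next
    case False
    have "0 \<le> r ^ nat z" using r by simp
    then have "(1 + r) / (1 - r) - r ^ nat z / (1 - r) = (1 + r - r ^ nat z) / (1 - r)" by (simp add: diff_divide_distrib)
    moreover have "(1 + r - r ^ nat z) / (1 - r) \<le> 2 / (1 - r)"
      by (rule divide_right_mono) (use d \<open>0 \<le> r ^ nat z\<close> r in linarith)+
    ultimately show ?thesis using False by (simp add: Phi_def)
  qed
qed

lemma abs_geo_partial:
  fixes r :: real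
  assumes r: "0 < r" "r < 1"
  shows "(\<Sum>l<N. r ^ nat \<bar>int l + y\<bar>) \<le> 2 / (1 - r)"
proof -
  have "(\<Sum>l<N. r ^ nat \<bar>int l + y\<bar>) = Phi r (int N + y) - Phi r y"
    by (induction N) (simp_all add: Phi_step[OF r, symmetric] algebra_simps)
  then show ?thesis using Phi_bounds[OF r] by (smt (verit))
qed

lemma jpow:
  fixes \<sigma> :: real assumes s: "0 < \<sigma>" "\<sigma> < 1"
  shows "real j * \<sigma> ^ j \<le> 1 / (1 - \<sigma>)"
proof -
  have "real j * \<sigma> ^ j = (\<Sum>i<j. \<sigma> ^ j)" by simp
  also have "\<dots> \<le> (\<Sum>i<j. \<sigma> ^ i)" using s by (intro sum_mono power_decreasing) auto
  also have "\<dots> = (1 - \<sigma>^j) / (1 - \<sigma>)" using s by (simp add: sum_gp_strict)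
  also have "\<dots> \<le> 1 / (1 - \<sigma>)" using s by (simp add: divide_right_mono)
  finally show ?thesis .
qed

lemma abs_geo_partial2:
  fixes r :: real
  assumes r: "0 < r" "r < 1"
  shows "(\<Sum>l<N. \<bar>int l + y\<bar> * r ^ nat \<bar>int l + y\<bar>) \<le> 2 / (1 - sqrt r)^2"
proof -
  let ?s = "sqrt r"
  have s: "0 < ?s" "?s < 1" using r by auto
  have "\<bar>int l + y\<bar> * r ^ nat \<bar>int l + y\<bar> \<le> 1 / (1 - ?s) * ?s ^ nat \<bar>int l + y\<bar>" for l
  proof -
    let ?j = "nat \<bar>int l + y\<bar>"
    have "r ^ ?j = ?s ^ ?j * ?s ^ ?j" using r by (simp add: power_mult_distrib[symmetric])
    then have "\<bar>int l + y\<bar> * r ^ ?j = (real ?j * ?s ^ ?j) * ?s ^ ?j" by simp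
    also have "\<dots> \<le> 1 / (1 - ?s) * ?s ^ ?j" using s by (intro mult_right_mono jpow) auto
    finally show ?thesis .
  qed
  then have "(\<Sum>l<N. \<bar>int l + y\<bar> * r ^ nat \<bar>int l + y\<bar>) \<le> (\<Sum>l<N. 1 / (1 - ?s) * ?s ^ nat \<bar>int l + y\<bar>)"
    by (intro sum_mono)
  also have "\<dots> = 1 / (1 - ?s) * (\<Sum>l<N. ?s ^ nat \<bar>int l + y\<bar>)" by (simp add: sum_distrib_left)
  also have "\<dots> \<le> 1 / (1 - ?s) * (2 / (1 - ?s))" using s by (intro mult_left_mono abs_geo_partial) auto
  finally show ?thesis by (simp add: power2_eq_square)
qed

lemma geo_partial:
  fixes r :: real assumes r: "0 < r" "r < 1"
  shows "(\<Sum>l<N. r ^ l) \<le> 1 / (1 - r)"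
proof -
  have "(\<Sum>l<N. r ^ l) = (1 - r^N) / (1 - r)" using r by (simp add: sum_gp_strict)
  also have "\<dots> \<le> 1 / (1 - r)" using r by (simp add: divide_right_mono)
  finally show ?thesis .
qed

lemma T1:
  fixes r :: real and x :: int assumes r: "0 < r" "r < 1"
  shows "(\<Sum>l<N. r ^ nat \<bar>int (l + m) - x\<bar>) \<le> 2 / (1 - r)"
  using abs_geo_partial[OF r, where N=N and y="int m - x"] by (simp add: algebra_simps)

lemma T2:
  fixes r :: real and x :: int assumes r: "0 < r" "r < 1" and x: "x \<ge> 0"
  shows "(\<Sum>l<N. real (l + m) * r ^ nat \<bar>int (l + m) - x\<bar>) \<le> x * (2 / (1 - r)) + 2 / (1 - sqrt r)^2"
proof -
  have "(\<Sum>l<N. real (l + m) * r ^ nat \<bar>int (l + m) - x\<bar>)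
     \<le> (\<Sum>l<N. x * r ^ nat \<bar>int (l + m) - x\<bar> + \<bar>int l + (int m - x)\<bar> * r ^ nat \<bar>int l + (int m - x)\<bar>)"
  proof (rule sum_mono)
    fix l
    have "real (l + m) \<le> x + \<bar>int l + (int m - x)\<bar>" by linarith
    then have "real (l + m) * r ^ nat \<bar>int (l + m) - x\<bar> \<le> (x + \<bar>int l + (int m - x)\<bar>) * r ^ nat \<bar>int (l + m) - x\<bar>"
      using r by (intro mult_right_mono) auto
    then show "real (l + m) * r ^ nat \<bar>int (l + m) - x\<bar> \<le> x * r ^ nat \<bar>int (l + m) - x\<bar> + \<bar>int l + (int m - x)\<bar> * r ^ nat \<bar>int l + (int m - x)\<bar>"
      by (simp add: algebra_simps)
  qed
  also have "\<dots> = x * (\<Sum>l<N. r ^ nat \<bar>int (l + m) - x\<bar>) + (\<Sum>l<N. \<bar>int l + (int m - x)\<bar> * r ^ nat \<bar>int l + (int m - x)\<bar>)"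
    by (simp add: sum.distrib sum_distrib_left)
  also have "\<dots> \<le> x * (2 / (1 - r)) + 2 / (1 - sqrt r)^2"
    using x by (intro add_mono mult_left_mono T1[OF r] abs_geo_partial2[OF r]) auto
  finally show ?thesis .
qed

lemma T34_pt:
  fixes r :: real assumes r: "0 < r" "r < 1" and x: "0 \<le> x" "x \<le> 2 * int s" and m: "4 * s < m"
  shows "r ^ nat \<bar>int (l + m) - x\<bar> \<le> r ^ l * sqrt r ^ m"
proof -
  have e: "nat \<bar>int (l + m) - x\<bar> = l + (m - nat x)" using x m by auto
  have "2 * (m - nat x) \<ge> m" using x m by auto
  then have "sqrt r ^ (2 * (m - nat x)) \<le> sqrt r ^ m" using r by (intro power_decreasing) auto
  moreover have "sqrt r ^ (2 * (m - nat x)) = r ^ (m - nat x)" using r by (simp add: power_mult)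
  ultimately show ?thesis unfolding e power_add using r by (intro mult_left_mono) auto
qed

lemma T3:
  fixes r :: real assumes r: "0 < r" "r < 1" and x: "0 \<le> x" "x \<le> 2 * int s" and m: "4 * s < m"
  shows "(\<Sum>l<N. r ^ nat \<bar>int (l + m) - x\<bar>) \<le> sqrt r ^ m / (1 - r)"
proof -
  have "(\<Sum>l<N. r ^ nat \<bar>int (l + m) - x\<bar>) \<le> (\<Sum>l<N. r ^ l * sqrt r ^ m)"
    by (intro sum_mono T34_pt[OF r x m])
  also have "\<dots> = (\<Sum>l<N. r ^ l) * sqrt r ^ m" by (simp add: sum_distrib_right)
  also have "\<dots> \<le> 1 / (1 - r) * sqrt r ^ m" using r by (intro mult_right_mono geo_partial) auto
  finally show ?thesis by simp
qed

lemma T4: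
  fixes r :: real assumes r: "0 < r" "r < 1" and x: "0 \<le> x" "x \<le> 2 * int s" and m: "4 * s < m"
  shows "(\<Sum>l<N. real (l + m) * r ^ nat \<bar>int (l + m) - x\<bar>) \<le> sqrt r ^ m * (real m / (1 - r) + 1 / (1 - sqrt r)^2)"
proof -
  let ?s = "sqrt r"
  have s: "0 < ?s" "?s < 1" using r by auto
  have "(\<Sum>l<N. real (l + m) * r ^ nat \<bar>int (l + m) - x\<bar>) \<le> (\<Sum>l<N. real (l + m) * (r ^ l * ?s ^ m))"
    by (intro sum_mono mult_left_mono T34_pt[OF r x m]) auto
  also have "\<dots> = ?s ^ m * (real m * (\<Sum>l<N. r ^ l) + (\<Sum>l<N. real l * r ^ l))"
    by (simp add: sum_distrib_left sum_distrib_right sum.distrib algebra_simps)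
  also have "\<dots> \<le> ?s ^ m * (real m * (1 / (1 - r)) + 1 / (1 - ?s)^2)"
  proof (rule mult_left_mono, rule add_mono)
    show "real m * (\<Sum>l<N. r ^ l) \<le> real m * (1 / (1 - r))" by (intro mult_left_mono geo_partial[OF r]) auto
    have "(\<Sum>l<N. real l * r ^ l) \<le> (\<Sum>l<N. 1 / (1 - ?s) * ?s ^ l)"
    proof (rule sum_mono)
      fix l
      have "r ^ l = ?s ^ l * ?s ^ l" using r by (simp add: power_mult_distrib[symmetric])
      then have "real l * r ^ l = (real l * ?s ^ l) * ?s ^ l" by simp
      also have "\<dots> \<le> 1 / (1 - ?s) * ?s ^ l" using s by (intro mult_right_mono jpow) auto
      finally show "real l * r ^ l \<le> 1 / (1 - ?s) * ?s ^ l" .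
    qed
    also have "\<dots> = 1 / (1 - ?s) * (\<Sum>l<N. ?s ^ l)" by (simp add: sum_distrib_left)
    also have "\<dots> \<le> 1 / (1 - ?s) * (1 / (1 - ?s))" using s by (intro mult_left_mono geo_partial) auto
    finally show "(\<Sum>l<N. real l * r ^ l) \<le> 1 / (1 - ?s)^2" by (simp add: power2_eq_square)
  qed (use s in auto)
  finally show ?thesis by simp
qed


definition Gf :: "real \<Rightarrow> nat \<Rightarrow> nat \<Rightarrow> real" where
  "Gf r s l = (\<Sum>k\<in>{1..s}. \<Sum>a\<in>{1..s}. r ^ nat \<bar>int l - int k\<bar> + r ^ nat \<bar>int l - int a - int k\<bar> + r ^ l + r ^ nat \<bar>int l - int a\<bar>)"

lemma Gf_alt: "Gf r s l = (\<Sum>k\<in>{1..s}. \<Sum>a\<in>{1..s}. r ^ nat \<bar>int l - int k\<bar> + r ^ nat \<bar>int l - (int a + int k)\<bar> + r ^ nat \<bar>int l - 0\<bar> + r ^ nat \<bar>int l - int a\<bar>)"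
  unfolding Gf_def by (simp add: algebra_simps)

lemma Gf_swap: "(\<Sum>l<N. f l * Gf r s (l + m)) = (\<Sum>k\<in>{1..s}. \<Sum>a\<in>{1..s}.
   (\<Sum>l<N. f l * r ^ nat \<bar>int (l + m) - int k\<bar>) + (\<Sum>l<N. f l * r ^ nat \<bar>int (l + m) - (int a + int k)\<bar>) +
   (\<Sum>l<N. f l * r ^ nat \<bar>int (l + m) - 0\<bar>) + (\<Sum>l<N. f l * r ^ nat \<bar>int (l + m) - int a\<bar>))"
proof -
  have "(\<Sum>l<N. f l * Gf r s (l + m)) = (\<Sum>l<N. \<Sum>k\<in>{1..s}. \<Sum>a\<in>{1..s}. f l * r ^ nat \<bar>int (l + m) - int k\<bar> + f l * r ^ nat \<bar>int (l + m) - (int a + int k)\<bar> + f l * r ^ nat \<bar>int (l + m) - 0\<bar> + f l * r ^ nat \<bar>int (l + m) - int a\<bar>)"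
    unfolding Gf_alt by (simp add: sum_distrib_left algebra_simps)
  also have "\<dots> = (\<Sum>k\<in>{1..s}. \<Sum>l<N. \<Sum>a\<in>{1..s}. f l * r ^ nat \<bar>int (l + m) - int k\<bar> + f l * r ^ nat \<bar>int (l + m) - (int a + int k)\<bar> + f l * r ^ nat \<bar>int (l + m) - 0\<bar> + f l * r ^ nat \<bar>int (l + m) - int a\<bar>)"
    by (rule sum.swap)
  also have "\<dots> = (\<Sum>k\<in>{1..s}. \<Sum>a\<in>{1..s}. \<Sum>l<N. f l * r ^ nat \<bar>int (l + m) - int k\<bar> + f l * r ^ nat \<bar>int (l + m) - (int a + int k)\<bar> + f l * r ^ nat \<bar>int (l + m) - 0\<bar> + f l * r ^ nat \<bar>int (l + m) - int a\<bar>)"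
    by (intro sum.cong refl sum.swap)
  finally show ?thesis by (simp add: sum.distrib)
qed

lemma sum_sq_const: "(\<Sum>k\<in>{1..s}. \<Sum>a\<in>{1..s}. (c::real)) = real s ^ 2 * c"
  by (simp add: power2_eq_square)

lemma Gf_part1:
  fixes r :: real assumes r: "0 < r" "r < 1"
  shows "(\<Sum>l<N. Gf r s (l + m)) \<le> real s ^ 2 * (8 / (1 - r))"
proof -
  have "(\<Sum>l<N. Gf r s (l + m)) = (\<Sum>l<N. 1 * Gf r s (l + m))" by simp
  also have "\<dots> \<le> (\<Sum>k\<in>{1..s}. \<Sum>a\<in>{1..s}. 2/(1-r) + 2/(1-r) + 2/(1-r) + 2/(1-r))"
    unfolding Gf_swap
  proof (intro sum_mono add_mono)
    fix k a
    show "(\<Sum>l<N. 1 * r ^ nat \<bar>int (l + m) - int k\<bar>) \<le> 2/(1-r)" using T1[OF r, where N=N and m=m and x="int k"] by simp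
    show "(\<Sum>l<N. 1 * r ^ nat \<bar>int (l + m) - (int a + int k)\<bar>) \<le> 2/(1-r)" using T1[OF r, where N=N and m=m and x="int a + int k"] by simp
    show "(\<Sum>l<N. 1 * r ^ nat \<bar>int (l + m) - 0\<bar>) \<le> 2/(1-r)" using T1[OF r, where N=N and m=m and x=0] by simp
    show "(\<Sum>l<N. 1 * r ^ nat \<bar>int (l + m) - int a\<bar>) \<le> 2/(1-r)" using T1[OF r, where N=N and m=m and x="int a"] by simp
  qed
  also have "\<dots> = real s ^ 2 * (8 / (1 - r))" by (simp add: sum_sq_const power2_eq_square)
  finally show ?thesis .
qed

lemma Gf_part2:
  fixes r :: real assumes r: "0 < r" "r < 1"
  shows "(\<Sum>l<N. real (l + m) * Gf r s (l + m)) \<le> real s ^ 2 * (4 * (2 * s * (2 / (1 - r)) + 2 / (1 - sqrt r)^2))"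
proof -
  let ?B = "\<lambda>x::real. x * (2 / (1 - r)) + 2 / (1 - sqrt r)^2"
  have mono: "?B x \<le> ?B y" if "x \<le> y" for x y using that r by (intro add_mono mult_right_mono) auto
  have "(\<Sum>l<N. real (l + m) * Gf r s (l + m)) \<le> (\<Sum>k\<in>{1..s}. \<Sum>a\<in>{1..s}. ?B (2 * s) + ?B (2 * s) + ?B (2 * s) + ?B (2 * s))"
    unfolding Gf_swap
  proof (intro sum_mono add_mono)
    fix k a assume k: "k \<in> {1..s}" and a: "a \<in> {1..s}"
    show "(\<Sum>l<N. real (l + m) * r ^ nat \<bar>int (l + m) - int k\<bar>) \<le> ?B (2 * s)"
      using T2[OF r, where N=N and m=m and x="int k"] mono[of k "2 * s"] k by simp
    show "(\<Sum>l<N. real (l + m) * r ^ nat \<bar>int (l + m) - (int a + int k)\<bar>) \<le> ?B (2 * s)"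
      using T2[OF r, where N=N and m=m and x="int a + int k"] mono[of "a + k" "2 * s"] k a by simp
    show "(\<Sum>l<N. real (l + m) * r ^ nat \<bar>int (l + m) - 0\<bar>) \<le> ?B (2 * s)"
      using T2[OF r, where N=N and m=m and x=0] mono[of 0 "2 * s"] by simp
    show "(\<Sum>l<N. real (l + m) * r ^ nat \<bar>int (l + m) - int a\<bar>) \<le> ?B (2 * s)"
      using T2[OF r, where N=N and m=m and x="int a"] mono[of a "2 * s"] a by simp
  qed
  also have "\<dots> = real s ^ 2 * (4 * ?B (2 * s))" by (simp add: sum_sq_const power2_eq_square)
  finally show ?thesis by simp
qed

lemma Gf_part3:
  fixes r :: real assumes r: "0 < r" "r < 1" and m: "4 * s < m"
  shows "(\<Sum>l<N. Gf r s (l + m)) \<le> real s ^ 2 * (4 * (sqrt r ^ m / (1 - r)))"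
proof -
  have "(\<Sum>l<N. Gf r s (l + m)) = (\<Sum>l<N. 1 * Gf r s (l + m))" by simp
  also have "\<dots> \<le> (\<Sum>k\<in>{1..s}. \<Sum>a\<in>{1..s}. sqrt r ^ m / (1 - r) + sqrt r ^ m / (1 - r) + sqrt r ^ m / (1 - r) + sqrt r ^ m / (1 - r))"
    unfolding Gf_swap
  proof (intro sum_mono add_mono)
    fix k a assume k: "k \<in> {1..s}" and a: "a \<in> {1..s}"
    show "(\<Sum>l<N. 1 * r ^ nat \<bar>int (l + m) - int k\<bar>) \<le> sqrt r ^ m / (1 - r)"
      using T3[OF r _ _ m, where N=N and x="int k"] k by simp
    show "(\<Sum>l<N. 1 * r ^ nat \<bar>int (l + m) - (int a + int k)\<bar>) \<le> sqrt r ^ m / (1 - r)"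
      using T3[OF r _ _ m, where N=N and x="int a + int k"] k a by simp
    show "(\<Sum>l<N. 1 * r ^ nat \<bar>int (l + m) - 0\<bar>) \<le> sqrt r ^ m / (1 - r)"
      using T3[OF r _ _ m, where N=N and x=0] by simp
    show "(\<Sum>l<N. 1 * r ^ nat \<bar>int (l + m) - int a\<bar>) \<le> sqrt r ^ m / (1 - r)"
      using T3[OF r _ _ m, where N=N and x="int a"] a by simp
  qed
  also have "\<dots> = real s ^ 2 * (4 * (sqrt r ^ m / (1 - r)))" by (simp add: sum_sq_const power2_eq_square)
  finally show ?thesis .
qed

lemma Gf_part4:
  fixes r :: real assumes r: "0 < r" "r < 1" and m: "4 * s < m"
  shows "(\<Sum>l<N. real (l + m) * Gf r s (l + m)) \<le> real s ^ 2 * (4 * (sqrt r ^ m * (real m / (1 - r) + 1 / (1 - sqrt r)^2)))"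
proof -
  let ?B = "sqrt r ^ m * (real m / (1 - r) + 1 / (1 - sqrt r)^2)"
  have "(\<Sum>l<N. real (l + m) * Gf r s (l + m)) \<le> (\<Sum>k\<in>{1..s}. \<Sum>a\<in>{1..s}. ?B + ?B + ?B + ?B)"
    unfolding Gf_swap
  proof (intro sum_mono add_mono)
    fix k a assume k: "k \<in> {1..s}" and a: "a \<in> {1..s}"
    show "(\<Sum>l<N. real (l + m) * r ^ nat \<bar>int (l + m) - int k\<bar>) \<le> ?B"
      using T4[OF r _ _ m, where N=N and x="int k"] k by simp
    show "(\<Sum>l<N. real (l + m) * r ^ nat \<bar>int (l + m) - (int a + int k)\<bar>) \<le> ?B"
      using T4[OF r _ _ m, where N=N and x="int a + int k"] k a by simp
    show "(\<Sum>l<N. real (l + m) * r ^ nat \<bar>int (l + m) - 0\<bar>) \<le> ?B"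
      using T4[OF r _ _ m, where N=N and x=0] by simp
    show "(\<Sum>l<N. real (l + m) * r ^ nat \<bar>int (l + m) - int a\<bar>) \<le> ?B"
      using T4[OF r _ _ m, where N=N and x="int a"] a by simp
  qed
  also have "\<dots> = real s ^ 2 * (4 * ?B)" by (simp add: sum_sq_const power2_eq_square)
  finally show ?thesis .
qed


context model begin

lemma sum_L_le:
  fixes h :: "int \<Rightarrow> real"
  assumes h0: "\<And>x. h x \<ge> 0"
  shows "(\<Sum>ll\<in>{max (i - int s) 1 .. i - int Mn - 1}. h ll) \<le> (\<Sum>a\<in>{1..s}. h (i - int a))"
proof -
  have sub: "{max (i - int s) 1 .. i - int Mn - 1} \<subseteq> (\<lambda>a. i - int a) ` {1..s}"
  proof
    fix x assume x: "x \<in> {max (i - int s) 1 .. i - int Mn - 1}"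
    then have "nat (i - x) \<in> {1..s}" "x = i - int (nat (i - x))" by auto
    then show "x \<in> (\<lambda>a. i - int a) ` {1..s}" by blast
  qed
  have inj: "inj_on (\<lambda>a. i - int a) {1..s}" by (auto simp: inj_on_def)
  have "(\<Sum>ll\<in>{max (i - int s) 1 .. i - int Mn - 1}. h ll) \<le> (\<Sum>ll\<in>(\<lambda>a. i - int a) ` {1..s}. h ll)"
    by (rule sum_mono2[OF _ sub]) (use h0 in auto)
  also have "\<dots> = (\<Sum>a\<in>{1..s}. h (i - int a))" using sum.reindex[OF inj, of h] by (simp add: o_def)
  finally show ?thesis .
qed

lemma theta_le:
  fixes K :: "real \<Rightarrow> real"
  assumes Kb: "\<forall>x. \<bar>K x\<bar> \<le> Bk" and Bk: "Bk > 0" and pp: "1 \<le> pp" "pp \<le> 3"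
  shows "theta M H \<eta> \<eta>' n K \<tau> s Mn (real pp) l \<le> ennreal ((2*Bk*Acst*real (CARD('p))^2) / real s * Gf \<rho> s l)"
proof (cases "s = 0")
  case True
  have z: "trW H \<zeta> n K \<tau> 0 Mn t u i \<omega> = 0" for \<zeta> t u i \<omega> by (simp add: trW_def Wmat_def)
  have "Lnorm M (real pp) (\<lambda>\<omega>. trW H \<eta> n K \<tau> 0 Mn t u i \<omega> - trW H (perturb \<eta> \<eta>' (i - int l)) n K \<tau> 0 Mn t u i \<omega>) = 0" for t u i
    using pp by (simp add: z Lnorm_def)
  then show ?thesis using True unfolding theta_def by (intro SUP_least) (auto split: prod.splits)
next
  case False
  then have s: "s > 0" by simp
  let ?cst = "2*Bk/s * Acst"
  show ?thesis unfolding theta_def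
  proof (rule SUP_least)
    fix x assume "x \<in> {0..1::real} \<times> {0..1::real} \<times> {1..int n}"
    then obtain t u i where x: "x = (t,u,i)" and u: "u \<in> {0..1}" by auto
    let ?L = "{max (i - int s) 1 .. i - int Mn - 1}"
    let ?f = "\<lambda>x. ?cst * \<rho> ^ nat \<bar>(case x of ((k,ll),(r,j),q) \<Rightarrow>
             (if q = (0::nat) then i - int k else if q = 1 then ll - int k else if q = 2 then i else ll)) - (i - int l)\<bar>"
    have "(\<Sum>x\<in>({1..s} \<times> ?L) \<times> ((UNIV::'p set) \<times> (UNIV::'p set)) \<times> {..<4::nat}. ?f x)
       = (\<Sum>k\<in>{1..s}. \<Sum>ll\<in>?L. \<Sum>r\<in>(UNIV::'p set). \<Sum>j\<in>(UNIV::'p set). \<Sum>q\<in>{..<4::nat}. ?f ((k,ll),(r,j),q))"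
      by (simp only: sum.cartesian_product')
    also have "\<dots> = (\<Sum>k\<in>{1..s}. \<Sum>ll\<in>?L. real (CARD('p))^2 * ?cst *
        (\<rho> ^ nat \<bar>int l - int k\<bar> + \<rho> ^ nat \<bar>ll - int k - (i - int l)\<bar> + \<rho> ^ l + \<rho> ^ nat \<bar>ll - (i - int l)\<bar>))"
      by (simp add: eval_nat_numeral power2_eq_square algebra_simps)
    also have "\<dots> \<le> (\<Sum>k\<in>{1..s}. \<Sum>a\<in>{1..s}. real (CARD('p))^2 * ?cst *
        (\<rho> ^ nat \<bar>int l - int k\<bar> + \<rho> ^ nat \<bar>(i - int a) - int k - (i - int l)\<bar> + \<rho> ^ l + \<rho> ^ nat \<bar>(i - int a) - (i - int l)\<bar>))"
      by (intro sum_mono sum_L_le) (use Bk s Acst rho in auto)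
    also have "\<dots> = (2*Bk*Acst*real (CARD('p))^2) / real s * Gf \<rho> s l"
      unfolding Gf_def sum_distrib_left
      by (intro sum.cong refl) (simp add: algebra_simps)
    finally have "(\<Sum>x\<in>({1..s} \<times> ?L) \<times> ((UNIV::'p set) \<times> (UNIV::'p set)) \<times> {..<4::nat}. ?f x)
        \<le> (2*Bk*Acst*real (CARD('p))^2) / real s * Gf \<rho> s l" .
    then show "(case x of (t, u, i) \<Rightarrow> Lnorm M (real pp) (\<lambda>\<omega>. trW H \<eta> n K \<tau> s Mn t u i \<omega> - trW H (perturb \<eta> \<eta>' (i - int l)) n K \<tau> s Mn t u i \<omega>))
       \<le> ennreal ((2*Bk*Acst*real (CARD('p))^2) / real s * Gf \<rho> s l)"
      using Dbound[OF u Kb Bk pp s, of n \<tau> Mn t i l] unfolding x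
      by (auto elim!: order_trans intro: ennreal_leI)
  qed
qed

end

lemma ennsum_bound:
  fixes g :: "nat \<Rightarrow> real"
  assumes g0: "\<And>l. 0 \<le> g l" and b: "\<And>N. (\<Sum>l<N. g l) \<le> B"
  shows "(\<Sum>l. ennreal (g l)) \<le> ennreal B"
proof (rule suminf_le_const[OF summableI])
  fix N
  have "(\<Sum>l<N. ennreal (g l)) = ennreal (\<Sum>l<N. g l)" using g0 by simp
  also have "\<dots> \<le> ennreal B" using b by (rule ennreal_leI)
  finally show "sum (\<lambda>l. ennreal (g l)) {..<N} \<le> ennreal B" .
qed

context model begin

lemma Gf_nonneg: "0 \<le> Gf \<rho> s l" using rho unfolding Gf_def by (intro sum_nonneg add_nonneg_nonneg) auto

lemma Theta_from:
  fixes K :: "real \<Rightarrow> real"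
  assumes Kb: "\<forall>x. \<bar>K x\<bar> \<le> Bk" and Bk: "Bk > 0" and pp: "1 \<le> pp" "pp \<le> 3"
    and B: "\<And>N. (\<Sum>l<N. Gf \<rho> s (l + m)) \<le> B"
  shows "Theta M H \<eta> \<eta>' n K \<tau> s Mn (real pp) m \<le> ennreal ((2*Bk*Acst*real (CARD('p))^2) / real s * B)"
proof -
  let ?C = "(2*Bk*Acst*real (CARD('p))^2) / real s"
  have C0: "?C \<ge> 0" using Bk Acst by simp
  have "Theta M H \<eta> \<eta>' n K \<tau> s Mn (real pp) m \<le> (\<Sum>l. ennreal (?C * Gf \<rho> s (l + m)))"
    unfolding Theta_def by (intro suminf_le summableI theta_le[OF Kb Bk pp])
  also have "\<dots> \<le> ennreal (?C * B)"
  proof (rule ennsum_bound)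
    show "0 \<le> ?C * Gf \<rho> s (l + m)" for l using C0 Gf_nonneg by (rule mult_nonneg_nonneg)
    show "(\<Sum>l<N. ?C * Gf \<rho> s (l + m)) \<le> ?C * B" for N
      unfolding sum_distrib_left[symmetric] by (rule mult_left_mono[OF B C0])
  qed
  finally show ?thesis .
qed

lemma Xi_from:
  fixes K :: "real \<Rightarrow> real"
  assumes Kb: "\<forall>x. \<bar>K x\<bar> \<le> Bk" and Bk: "Bk > 0" and pp: "1 \<le> pp" "pp \<le> 3"
    and B: "\<And>N. (\<Sum>l<N. real (l + m) * Gf \<rho> s (l + m)) \<le> B"
  shows "Xi M H \<eta> \<eta>' n K \<tau> s Mn (real pp) m \<le> ennreal ((2*Bk*Acst*real (CARD('p))^2) / real s * B)"
proof -
  let ?C = "(2*Bk*Acst*real (CARD('p))^2) / real s"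
  have C0: "?C \<ge> 0" using Bk Acst by simp
  have "Xi M H \<eta> \<eta>' n K \<tau> s Mn (real pp) m \<le> (\<Sum>l. ennreal (?C * (real (l + m) * Gf \<rho> s (l + m))))"
    unfolding Xi_def
  proof (intro suminf_le summableI)
    fix l
    have "of_nat (l + m) * theta M H \<eta> \<eta>' n K \<tau> s Mn (real pp) (l + m) \<le> ennreal (real (l + m)) * ennreal (?C * Gf \<rho> s (l + m))"
      by (simp only: ennreal_of_nat_eq_real_of_nat) (intro mult_left_mono theta_le[OF Kb Bk pp]; simp)
    also have "\<dots> = ennreal (?C * (real (l + m) * Gf \<rho> s (l + m)))"
    proof -
      have "ennreal (real (l + m)) * ennreal (?C * Gf \<rho> s (l + m)) = ennreal (real (l + m) * (?C * Gf \<rho> s (l + m)))"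
        by (rule ennreal_mult[symmetric]) (simp, rule mult_nonneg_nonneg[OF C0 Gf_nonneg])
      then show ?thesis by (simp add: mult_ac)
    qed
    finally show "of_nat (l + m) * theta M H \<eta> \<eta>' n K \<tau> s Mn (real pp) (l + m) \<le> ennreal (?C * (real (l + m) * Gf \<rho> s (l + m)))" .
  qed
  also have "\<dots> \<le> ennreal (?C * B)"
  proof (rule ennsum_bound)
    show "0 \<le> ?C * (real (l + m) * Gf \<rho> s (l + m))" for l using C0 Gf_nonneg by (intro mult_nonneg_nonneg) auto
    show "(\<Sum>l<N. ?C * (real (l + m) * Gf \<rho> s (l + m))) \<le> ?C * B" for N
      unfolding sum_distrib_left[symmetric] by (rule mult_left_mono[OF B C0])
  qed
  finally show ?thesis .
qed

end

lemma div_sq: "C / real (s::nat) * (real s ^ 2 * X) = C * real s * (X::real)"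
  by (cases "s = 0") (simp_all add: power2_eq_square field_simps)

lemma mchi:
  fixes x :: real assumes x: "0 < x" "x < 1"
  shows "real m * (x^2)^m \<le> x^m / (1 - x)"
proof -
  have "real m * (x^2)^m = (real m * x^m) * x^m" by (simp add: power_mult[symmetric] power2_eq_square power_mult_distrib mult_ac)
  also have "\<dots> \<le> 1 / (1 - x) * x^m" using x by (intro mult_right_mono jpow) auto
  finally show ?thesis by simp
qed

theorem lemmaB2:
  fixes M :: "'w measure" and S :: "'s measure"
    and \<eta> \<eta>' :: "int \<Rightarrow> 'w \<Rightarrow> 's"
    and H L :: "real \<Rightarrow> real \<Rightarrow> (nat \<Rightarrow> 's) \<Rightarrow> real^'p::finite"
    and m :: "real \<Rightarrow> real \<Rightarrow> real^'p"
    and K :: "real \<Rightarrow> real"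
    and b \<tau> :: "nat \<Rightarrow> real" and sN Mn N :: "nat \<Rightarrow> nat"
    and s chi chi0 K0 t0 c0 s_star M0 M1 c c' \<alpha> th q q' :: real
  assumes prob: "prob_space M"
    (* innovations: (eta_i) i.i.d., (eta'_i) an independent copy *)
    and indep: "prob_space.indep_vars M (\<lambda>_. S) (\<lambda>x. case x of Inl i \<Rightarrow> \<eta> i | Inr i \<Rightarrow> \<eta>' i) UNIV"
    and ident: "\<forall>i. distr M S (\<eta> i) = distr M S (\<eta> 0) \<and> distr M S (\<eta>' i) = distr M S (\<eta> 0)"
    (* measurable centered filter *)
    and H_meas: "\<forall>t u. H t u \<in> borel_measurable (PiM UNIV (\<lambda>_. S))"
    and centered: "\<forall>t u j. (\<integral>\<omega>. H t u (Fseq \<eta> 0 \<omega>) $ j \<partial>M) = 0"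
    (* local stationarity *)
    and chi: "0 < chi" "chi < 1"
    and phys: "\<exists>C. \<forall>i::nat. \<forall>t. \<forall>u\<in>{0..1}. \<forall>j.
        Lnorm M 1 (\<lambda>\<omega>. H t u (Fseq \<eta> (int i) \<omega>) $ j
                      - H t u (Fseq (perturb \<eta> \<eta>' 0) (int i) \<omega>) $ j) \<le> ennreal (C * chi ^ i)"
    and lip: "\<forall>t1 t2. \<forall>u\<in>{0..1}. \<forall>j.
        Lnorm M 2 (\<lambda>\<omega>. H t1 u (Fseq \<eta> 0 \<omega>) $ j - H t2 u (Fseq \<eta> 0 \<omega>) $ j)
          \<le> ennreal (K0 * \<bar>t1 - t2\<bar>)"
    (* Assumption A(1) *)
    and A1: "t0 > 0" "\<forall>t. \<forall>u\<in>{0..1}. \<forall>j.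
        (\<integral>\<^sup>+\<omega>. ennreal (exp (t0 * \<bar>H t u (Fseq \<eta> 0 \<omega>) $ j\<bar>)) \<partial>M) < ennreal c0"
    (* Assumption A(2) *)
    and A2_deriv: "\<forall>t x j. \<forall>u\<in>{0..1}.
        ((\<lambda>v. H t v x $ j) has_real_derivative (L t u x $ j)) (at u within {0..1})"
    and A2_meas: "\<forall>t u. L t u \<in> borel_measurable (PiM UNIV (\<lambda>_. S))"
    and A2_sstar: "s_star \<ge> 4" and A2_chi0: "0 < chi0" "chi0 < 1"
    and A2_phys: "\<exists>C. \<forall>i::nat. \<forall>t. \<forall>u\<in>{0..1}. \<forall>j.
        Lnorm M s_star (\<lambda>\<omega>. L t u (Fseq \<eta> (int i) \<omega>) $ j
                      - L t u (Fseq (perturb \<eta> \<eta>' 0) (int i) \<omega>) $ j) \<le> ennreal (C * chi0 ^ i)"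
    and A2_bound: "\<forall>i::int. \<forall>t. \<forall>u\<in>{0..1}. \<forall>j.
        Lnorm M s_star (\<lambda>\<omega>. L t u (Fseq \<eta> i \<omega>) $ j) < ennreal M0"
    (* Assumption A(3) *)
    and A3: "\<forall>u\<in>{0..1}. \<forall>t\<in>{0..1}.
        ((\<lambda>t. m t u) has_vector_derivative m1 t u) (at t within {0..1}) \<and>
        ((\<lambda>t. m1 t u) has_vector_derivative m2 t u) (at t within {0..1}) \<and>
        ((\<lambda>t. m2 t u) has_vector_derivative m3 t u) (at t within {0..1}) \<and>
        norm (m3 t u) \<le> M1"
    (* Assumption A(4) *)
    and A4: "c > 0" "\<forall>t\<in>{0..1}. \<forall>u\<in>{0..1}. \<forall>lam v.
        v \<noteq> 0 \<and> (Gamma0 M H \<eta> t u ** transpose (Gamma0 M H \<eta> t u)) *v v = lam *\<^sub>R v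
        \<longrightarrow> lam \<ge> c"
    (* kernel *)
    and K_sym: "\<forall>x. K (- x) = K x" and K_supp: "\<forall>x. x \<notin> {-1<..<1} \<longrightarrow> K x = 0"
    and K_int: "K integrable_on UNIV" "integral UNIV K = 1"
    and K_bdd: "bounded (range K)"
    (* bandwidths and tuning sequences *)
    and b_range: "\<forall>n. 0 < b n \<and> b n < 1" and tau_range: "\<forall>n. 0 < \<tau> n \<and> \<tau> n < 1"
    and N_rate: "\<alpha> \<ge> 0" "(\<lambda>n. real (N n)) \<in> O(\<lambda>n. real n powr \<alpha>)"
    and s_rate: "0 \<le> th" "th < 1/11"
        "(\<lambda>n. real (sN n) ^ 2) \<in> o(\<lambda>n. (real n * \<tau> n) powr th)"
    and tau_lim: "\<tau> \<longlonglongrightarrow> 0"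
    and f_lim: "q' \<ge> 2" "2 \<le> q" "q \<le> s_star / 2"
        "(\<lambda>n. real (sN n) * (real n * real (N n)) powr (1 / q)
                 * (1 / (real n * \<tau> n) + 1 / real (N n))
             + real (sN n) * \<tau> n powr (- 2 / q') * sqrt (real n * \<tau> n)
                 * (b n ^ 2 + 1 / (real n * b n))
             + \<tau> n powr (- 2 / q') * sqrt (real (sN n) * \<tau> n / b n)) \<longlonglongrightarrow> 0"
    and b_lim: "(\<lambda>n. ln (real n) ^ 4 / (real n * b n)) \<longlonglongrightarrow> 0"
    and M_lower: "c' > 0" "\<forall>\<^sub>F n in sequentially. real (Mn n) > c' * ln (real n)"
    and M_rate: "(\<lambda>n. real (Mn n)) \<in> o(\<lambda>n. real (sN n))"
    and s_log: "filterlim (\<lambda>n. real (sN n) / ln (real n)) at_top sequentially"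
    and s_val: "s = 2 \<or> s = 3"
  shows
    "(\<exists>C>0. \<exists>chi1.  0 < chi1 \<and> chi1 < 1 \<and>
        (\<forall>\<^sub>F n in sequentially. \<forall>mm::nat. mm > 4 * sN n \<longrightarrow>
            Theta M H \<eta> \<eta>' n K (\<tau> n) (sN n) (Mn n) s mm < ennreal (C * chi1 ^ mm) \<and>
            Xi M H \<eta> \<eta>' n K (\<tau> n) (sN n) (Mn n) s mm < ennreal (C * real mm * chi1 ^ mm)))
     \<and> (\<exists>C. \<forall>\<^sub>F n in sequentially. \<forall>mm::nat. mm \<le> 4 * sN n \<longrightarrow>
            Theta M H \<eta> \<eta>' n K (\<tau> n) (sN n) (Mn n) s mm \<le> ennreal (C * real (sN n)) \<and>
            Xi M H \<eta> \<eta>' n K (\<tau> n) (sN n) (Mn n) s mm \<le> ennreal (C * real (sN n) ^ 2))"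
proof -
  obtain Cp where Cp: "\<forall>i::nat. \<forall>t. \<forall>u\<in>{0..1}. \<forall>j.
        Lnorm M 1 (\<lambda>\<omega>. H t u (Fseq \<eta> (int i) \<omega>) $ j
                      - H t u (Fseq (perturb \<eta> \<eta>' 0) (int i) \<omega>) $ j) \<le> ennreal (Cp * chi ^ i)"
    using phys by blast
  define C\<phi> where "C\<phi> = \<bar>Cp\<bar> + 1"
  have Cphi: "C\<phi> > 0" by (simp add: C\<phi>_def add_nonneg_pos)
  have physC: "\<forall>i::nat. \<forall>t. \<forall>u\<in>{0..1}. \<forall>j.
        Lnorm M 1 (\<lambda>\<omega>. H t u (Fseq \<eta> (int i) \<omega>) $ j
                      - H t u (Fseq (perturb \<eta> \<eta>' 0) (int i) \<omega>) $ j) \<le> ennreal (C\<phi> * chi ^ i)"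
  proof (intro allI ballI)
    fix i :: nat and t u j assume u: "u \<in> {0..1::real}"
    have "Cp * chi ^ i \<le> C\<phi> * chi ^ i" using chi by (intro mult_right_mono) (auto simp: C\<phi>_def)
    then show "Lnorm M 1 (\<lambda>\<omega>. H t u (Fseq \<eta> (int i) \<omega>) $ j
                      - H t u (Fseq (perturb \<eta> \<eta>' 0) (int i) \<omega>) $ j) \<le> ennreal (C\<phi> * chi ^ i)"
      using Cp u by (meson ennreal_leI order_trans)
  qed
  obtain Bk where Bk: "Bk > 0" and Kb: "\<forall>x. \<bar>K x\<bar> \<le> Bk"
    using K_bdd unfolding bounded_pos by auto
  obtain pp :: nat where spp: "s = real pp" and pp: "1 \<le> pp" "pp \<le> 3"
  proof (cases "s = 2")
    case True
    then have "s = real (2::nat)" by simp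
    then show ?thesis using that[of 2] by simp
  next
    case False
    then have "s = real (3::nat)" using s_val by simp
    then show ?thesis using that[of 3] by simp
  qed
  interpret md: model M S \<eta> \<eta>' H C\<phi> chi t0 c0
    by (intro model.intro iidsetup.intro model_axioms.intro prob indep ident H_meas physC chi Cphi A1)
  define C1 where "C1 = 2*Bk*md.Acst*real (CARD('p))^2"
  have C1: "C1 > 0" unfolding C1_def using Bk md.Acst by simp
  define \<rho> where "\<rho> = md.\<rho>"
  have rho: "0 < \<rho>" "\<rho> < 1" using md.rho by (auto simp: \<rho>_def)
  define \<sigma> where "\<sigma> = sqrt \<rho>"
  have sig: "0 < \<sigma>" "\<sigma> < 1" using rho by (auto simp: \<sigma>_def)
  define x1 where "x1 = sqrt \<sigma>"
  have x1: "0 < x1" "x1 < 1" using sig by (auto simp: x1_def)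
  have sx: "\<sigma> = x1^2" using sig by (simp add: x1_def)
  define Cth where "Cth = C1 / ((1 - \<rho>) * (1 - x1))"
  define Cxi where "Cxi = C1 * (1 / (1 - \<rho>) + 1 / (1 - \<sigma>)^2) / (1 - x1)"
  have Cth: "Cth > 0" using C1 rho x1 by (simp add: Cth_def)
  have Cxi: "Cxi > 0" using C1 rho x1 sig by (simp add: Cxi_def add_pos_pos)
  define Cii where "Cii = max (8 * C1 / (1 - \<rho>)) (C1 * (16 / (1 - \<rho>) + 8 / (1 - \<sigma>)^2))"
  have partI: "Theta M H \<eta> \<eta>' n K (\<tau> n) (sN n) (Mn n) s mm < ennreal ((max Cth Cxi + 1) * x1 ^ mm) \<and>
            Xi M H \<eta> \<eta>' n K (\<tau> n) (sN n) (Mn n) s mm < ennreal ((max Cth Cxi + 1) * real mm * x1 ^ mm)"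
    if mm: "mm > 4 * sN n" for n mm
  proof
    let ?s = "sN n"
    have B3: "(\<Sum>l<N. Gf \<rho> ?s (l + mm)) \<le> real ?s ^ 2 * (4 * (\<sigma> ^ mm / (1 - \<rho>)))" for N
      unfolding \<sigma>_def by (rule Gf_part3[OF rho mm])
    have T1: "Theta M H \<eta> \<eta>' n K (\<tau> n) (sN n) (Mn n) s mm \<le> ennreal (C1 / real ?s * (real ?s ^ 2 * (4 * (\<sigma> ^ mm / (1 - \<rho>)))))"
      unfolding spp C1_def using md.Theta_from[OF Kb Bk pp B3[unfolded \<rho>_def]] by (simp add: \<rho>_def)
    have "C1 / real ?s * (real ?s ^ 2 * (4 * (\<sigma> ^ mm / (1 - \<rho>)))) = C1 * (real (4 * ?s)) * \<sigma> ^ mm / (1 - \<rho>)"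
      unfolding div_sq by (simp add: algebra_simps)
    also have "\<dots> \<le> C1 * real mm * \<sigma> ^ mm / (1 - \<rho>)"
      using mm C1 rho sig by (intro divide_right_mono mult_right_mono mult_left_mono) auto
    also have "\<dots> = C1 / (1 - \<rho>) * (real mm * (x1^2)^mm)" by (simp add: sx)
    also have "\<dots> \<le> C1 / (1 - \<rho>) * (x1^mm / (1 - x1))"
      using C1 rho by (intro mult_left_mono mchi[OF x1]) auto
    also have "\<dots> = Cth * x1 ^ mm" by (simp add: Cth_def)
    also have "\<dots> < (max Cth Cxi + 1) * x1 ^ mm" using x1 by (intro mult_strict_right_mono) auto
    finally have R: "C1 / real ?s * (real ?s ^ 2 * (4 * (\<sigma> ^ mm / (1 - \<rho>)))) < (max Cth Cxi + 1) * x1 ^ mm" .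
    have "0 < (max Cth Cxi + 1) * x1 ^ mm" using x1 Cth by simp
    then show "Theta M H \<eta> \<eta>' n K (\<tau> n) (sN n) (Mn n) s mm < ennreal ((max Cth Cxi + 1) * x1 ^ mm)"
      using le_less_trans[OF T1 ennreal_lessI[OF _ R]] by simp
  next
    let ?s = "sN n"
    have B4: "(\<Sum>l<N. real (l + mm) * Gf \<rho> ?s (l + mm)) \<le> real ?s ^ 2 * (4 * (\<sigma> ^ mm * (real mm / (1 - \<rho>) + 1 / (1 - \<sigma>)^2)))" for N
      unfolding \<sigma>_def by (rule Gf_part4[OF rho mm])
    have m1: "real mm \<ge> 1" using mm by simp
    let ?D = "1 / (1 - \<rho>) + 1 / (1 - \<sigma>)^2"
    have D: "?D > 0" using rho sig by (simp add: add_pos_pos)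
    have T1: "Xi M H \<eta> \<eta>' n K (\<tau> n) (sN n) (Mn n) s mm \<le> ennreal (C1 / real ?s * (real ?s ^ 2 * (4 * (\<sigma> ^ mm * (real mm / (1 - \<rho>) + 1 / (1 - \<sigma>)^2)))))"
      unfolding spp C1_def using md.Xi_from[OF Kb Bk pp B4[unfolded \<rho>_def]] by (simp add: \<rho>_def)
    have "C1 / real ?s * (real ?s ^ 2 * (4 * (\<sigma> ^ mm * (real mm / (1 - \<rho>) + 1 / (1 - \<sigma>)^2))))
        = C1 * real (4 * ?s) * (\<sigma> ^ mm * (real mm / (1 - \<rho>) + 1 / (1 - \<sigma>)^2))"
      unfolding div_sq by (simp add: algebra_simps)
    also have "\<dots> \<le> C1 * real mm * (\<sigma> ^ mm * (real mm * ?D))"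
    proof (intro mult_mono mult_left_mono)
      show "real (4 * ?s) \<le> real mm" using mm by simp
      show "real mm / (1 - \<rho>) + 1 / (1 - \<sigma>)^2 \<le> real mm * ?D"
        using m1 rho sig by (simp add: distrib_left divide_right_mono mult_le_cancel_right1 le_divide_eq_1)
    qed (use C1 rho sig m1 D in auto)
    also have "\<dots> = C1 * ?D * real mm * (real mm * (x1^2)^mm)" by (simp add: sx mult_ac)
    also have "\<dots> \<le> C1 * ?D * real mm * (x1^mm / (1 - x1))"
      using C1 D by (intro mult_left_mono mchi[OF x1]) auto
    also have "\<dots> = Cxi * real mm * x1 ^ mm" by (simp add: Cxi_def)
    also have "\<dots> < (max Cth Cxi + 1) * real mm * x1 ^ mm"
      using x1 m1 by (intro mult_strict_right_mono) auto
    finally have R: "C1 / real ?s * (real ?s ^ 2 * (4 * (\<sigma> ^ mm * (real mm / (1 - \<rho>) + 1 / (1 - \<sigma>)^2)))) < (max Cth Cxi + 1) * real mm * x1 ^ mm" .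
    have "0 < (max Cth Cxi + 1) * real mm * x1 ^ mm" using x1 Cxi m1 by simp
    then show "Xi M H \<eta> \<eta>' n K (\<tau> n) (sN n) (Mn n) s mm < ennreal ((max Cth Cxi + 1) * real mm * x1 ^ mm)"
      using le_less_trans[OF T1 ennreal_lessI[OF _ R]] by simp
  qed
  have partII: "Theta M H \<eta> \<eta>' n K (\<tau> n) (sN n) (Mn n) s mm \<le> ennreal (Cii * real (sN n)) \<and>
            Xi M H \<eta> \<eta>' n K (\<tau> n) (sN n) (Mn n) s mm \<le> ennreal (Cii * real (sN n) ^ 2)" for n mm
  proof
    let ?s = "sN n"
    have B1: "(\<Sum>l<N. Gf \<rho> ?s (l + mm)) \<le> real ?s ^ 2 * (8 / (1 - \<rho>))" for N
      by (rule Gf_part1[OF rho])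
    have T1: "Theta M H \<eta> \<eta>' n K (\<tau> n) (sN n) (Mn n) s mm \<le> ennreal (C1 / real ?s * (real ?s ^ 2 * (8 / (1 - \<rho>))))"
      unfolding spp C1_def using md.Theta_from[OF Kb Bk pp B1[unfolded \<rho>_def]] by (simp add: \<rho>_def)
    have "C1 / real ?s * (real ?s ^ 2 * (8 / (1 - \<rho>))) = (8 * C1 / (1 - \<rho>)) * real ?s"
      unfolding div_sq by (simp add: algebra_simps)
    also have "\<dots> \<le> Cii * real ?s" by (intro mult_right_mono) (auto simp: Cii_def)
    finally have R: "C1 / real ?s * (real ?s ^ 2 * (8 / (1 - \<rho>))) \<le> Cii * real ?s" .
    show "Theta M H \<eta> \<eta>' n K (\<tau> n) (sN n) (Mn n) s mm \<le> ennreal (Cii * real (sN n))"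
      using order_trans[OF T1 ennreal_leI[OF R]] .
  next
    let ?s = "sN n"
    have B2: "(\<Sum>l<N. real (l + mm) * Gf \<rho> ?s (l + mm)) \<le> real ?s ^ 2 * (4 * (2 * real ?s * (2 / (1 - \<rho>)) + 2 / (1 - \<sigma>)^2))" for N
      unfolding \<sigma>_def by (rule Gf_part2[OF rho])
    have T1: "Xi M H \<eta> \<eta>' n K (\<tau> n) (sN n) (Mn n) s mm \<le> ennreal (C1 / real ?s * (real ?s ^ 2 * (4 * (2 * real ?s * (2 / (1 - \<rho>)) + 2 / (1 - \<sigma>)^2))))"
      unfolding spp C1_def using md.Xi_from[OF Kb Bk pp B2[unfolded \<rho>_def]] by (simp add: \<rho>_def)
    have "C1 / real ?s * (real ?s ^ 2 * (4 * (2 * real ?s * (2 / (1 - \<rho>)) + 2 / (1 - \<sigma>)^2)))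
       = C1 * (real ?s * (16 * real ?s / (1 - \<rho>)) + real ?s * (8 / (1 - \<sigma>)^2))"
      unfolding div_sq by (simp add: algebra_simps)
    also have "\<dots> \<le> C1 * (real ?s ^ 2 * (16 / (1 - \<rho>)) + real ?s ^ 2 * (8 / (1 - \<sigma>)^2))"
    proof (intro mult_left_mono add_mono)
      show "real ?s * (16 * real ?s / (1 - \<rho>)) \<le> real ?s ^ 2 * (16 / (1 - \<rho>))"
        by (simp add: power2_eq_square mult_ac)
      have "real ?s \<le> real ?s ^ 2" by (cases ?s) (auto simp: power2_eq_square)
      then show "real ?s * (8 / (1 - \<sigma>)^2) \<le> real ?s ^ 2 * (8 / (1 - \<sigma>)^2)"
        using sig by (intro mult_right_mono) auto
    qed (use C1 in auto)
    also have "\<dots> = (C1 * (16 / (1 - \<rho>) + 8 / (1 - \<sigma>)^2)) * real ?s ^ 2" by (simp add: algebra_simps)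
    also have "\<dots> \<le> Cii * real ?s ^ 2" by (intro mult_right_mono) (auto simp: Cii_def)
    finally have R: "C1 / real ?s * (real ?s ^ 2 * (4 * (2 * real ?s * (2 / (1 - \<rho>)) + 2 / (1 - \<sigma>)^2))) \<le> Cii * real ?s ^ 2" .
    show "Xi M H \<eta> \<eta>' n K (\<tau> n) (sN n) (Mn n) s mm \<le> ennreal (Cii * real (sN n) ^ 2)"
      using order_trans[OF T1 ennreal_leI[OF R]] .
  qed
  show ?thesis
  proof (intro conjI exI)
    show "0 < max Cth Cxi + 1" using Cth by simp
    show "0 < x1" "x1 < 1" by (rule x1)+
    show "\<forall>\<^sub>F n in sequentially. \<forall>mm::nat. mm > 4 * sN n \<longrightarrow>
            Theta M H \<eta> \<eta>' n K (\<tau> n) (sN n) (Mn n) s mm < ennreal ((max Cth Cxi + 1) * x1 ^ mm) \<and>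
            Xi M H \<eta> \<eta>' n K (\<tau> n) (sN n) (Mn n) s mm < ennreal ((max Cth Cxi + 1) * real mm * x1 ^ mm)"
      using partI by (intro always_eventually) auto
    show "\<forall>\<^sub>F n in sequentially. \<forall>mm::nat. mm \<le> 4 * sN n \<longrightarrow>
            Theta M H \<eta> \<eta>' n K (\<tau> n) (sN n) (Mn n) s mm \<le> ennreal (Cii * real (sN n)) \<and>
            Xi M H \<eta> \<eta>' n K (\<tau> n) (sN n) (Mn n) s mm \<le> ennreal (Cii * real (sN n) ^ 2)"
      using partII by (intro always_eventually) auto
  qed
qed


end
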